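(* Let $M_1,M_2\in\mathbb{S}^n$ and let $$\mathcal{S}(\{M_1,M_2\})=\{X\in\mathbb{S}^n_+:\ \langle M_1,X\rangle\ge 0,\ \langle M_2,X\rangle\ge 0\}.$$ Then $\mathcal{S}(\{M_1,M_2\})$ is rank-one generated if and only if one of the following holds: (i) there exists $(\alpha_1,\alpha_2)\neq(0,0)$ such that $\alpha_1M_1+\alpha_2M_2\in\mathbb{S}^n_+$, or (ii) there exist $a,b,c\in\mathbb{R}^n$ such that $M_1=\mathrm{Sym}(ac^\top)$ and $M_2=\mathrm{Sym}(bc^\top)$.
   Context: $\mathbb{S}^n$ is the space of real symmetric $n\times n$ matrices with inner product $\langle A,B\rangle=\mathrm{tr}(AB)$, and $\mathbb{S}^n_+$ the cone of positive semidefinite matrices. For $M\in\mathbb{R}^{n\times n}$, $\mathrm{Sym}(M)=(M+M^\top)/2$. A closed convex cone $\mathcal{S}\subseteq\mathbb{S}^n_+$ is called rank-one generated (ROG) if $\mathcal{S}=\mathrm{conv}(\mathcal{S}\cap\{xx^\top: x\in\mathbb{R}^n\})$. *)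

theory Defs
  imports "HOL-Analysis.Analysis"
begin

definition sym_mat :: "real^'n^'n \<Rightarrow> bool" where
  "sym_mat A \<longleftrightarrow> transpose A = A"

definition psd :: "real^'n^'n \<Rightarrow> bool" where
  "psd A \<longleftrightarrow> sym_mat A \<and> (\<forall>x. x \<bullet> (A *v x) \<ge> 0)"

definition mat_inner :: "real^'n^'n \<Rightarrow> real^'n^'n \<Rightarrow> real" where
  "mat_inner A B = trace (A ** B)"

definition outer :: "real^'n \<Rightarrow> real^'n \<Rightarrow> real^'n^'n" where
  "outer a c = (\<chi> i j. a $ i * c $ j)"

definition Sym :: "real^'n^'n \<Rightarrow> real^'n^'n" where
  "Sym M = (1/2) *\<^sub>R (M + transpose M)"

definition ROG :: "(real^'n^'n) set \<Rightarrow> bool" where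
  "ROG S \<longleftrightarrow> S = convex hull (S \<inter> {outer x x | x. True})"

definition S2 :: "real^'n^'n \<Rightarrow> real^'n^'n \<Rightarrow> (real^'n^'n) set" where
  "S2 M1 M2 = {X. psd X \<and> mat_inner M1 X \<ge> 0 \<and> mat_inner M2 X \<ge> 0}"

end

theory Submission
  imports Defs
begin


definition qf :: "real^'n^'n \<Rightarrow> real^'n \<Rightarrow> real" where
  "qf M x = x \<bullet> (M *v x)"
definition bf :: "real^'n^'n \<Rightarrow> real^'n \<Rightarrow> real^'n \<Rightarrow> real" where
  "bf M x y = x \<bullet> (M *v y)"

lemma qf_bf: "qf M x = bf M x x" by (simp add: qf_def bf_def)

lemma bf_add1[simp]: "bf M (x + y) z = bf M x z + bf M y z"
  by (simp add: bf_def inner_add_left)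
lemma bf_add2[simp]: "bf M z (x + y) = bf M z x + bf M z y"
  by (simp add: bf_def inner_add_right matrix_vector_right_distrib)
lemma bf_diff1[simp]: "bf M (x - y) z = bf M x z - bf M y z"
  by (simp add: bf_def inner_diff_left)
lemma bf_diff2[simp]: "bf M z (x - y) = bf M z x - bf M z y"
  by (simp add: bf_def inner_diff_right matrix_vector_mult_diff_distrib)
lemma bf_scale1[simp]: "bf M (c *\<^sub>R x) z = c * bf M x z"
  by (simp add: bf_def)
lemma bf_scale2[simp]: "bf M z (c *\<^sub>R x) = c * bf M z x"
  by (simp add: bf_def matrix_vector_mult_scaleR)
lemma bf_neg1[simp]: "bf M (- x) z = - bf M x z"
  by (simp add: bf_def)
lemma bf_neg2[simp]: "bf M z (- x) = - bf M z x"
  by (metis bf_scale2 scaleR_minus1_left mult_minus1)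
lemma bf_zero1[simp]: "bf M 0 z = 0" by (simp add: bf_def)
lemma bf_zero2[simp]: "bf M z 0 = 0" by (simp add: bf_def)

lemma bf_sym: assumes "sym_mat M" shows "bf M x y = bf M y x"
proof -
  have "x \<bullet> (M *v y) = (x v* M) \<bullet> y" by (simp add: dot_lmul_matrix)
  also have "x v* M = transpose M *v x" by simp
  also have "\<dots> = M *v x" using assms by (simp add: sym_mat_def)
  finally show ?thesis by (simp add: bf_def inner_commute)
qed

lemma bf_matadd[simp]: "bf (A + B) x y = bf A x y + bf B x y"
  by (simp add: bf_def matrix_vector_mult_add_rdistrib inner_add_right)
lemma bf_matscale[simp]: "bf (c *\<^sub>R A) x y = c * bf A x y"
  by (simp add: bf_def matrix_vector_mult_def inner_vec_def sum_distrib_left mult.assoc mult.left_commute)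
lemma bf_matminus[simp]: "bf (A - B) x y = bf A x y - bf B x y"
  by (simp add: bf_def matrix_vector_mult_diff_rdistrib inner_diff_right)

lemma qf_matadd[simp]: "qf (A + B) x = qf A x + qf B x" by (simp add: qf_bf)
lemma qf_matscale[simp]: "qf (c *\<^sub>R A) x = c * qf A x" by (simp add: qf_bf)
lemma qf_matminus[simp]: "qf (A - B) x = qf A x - qf B x" by (simp add: qf_bf)
lemma qf_scale[simp]: "qf M (c *\<^sub>R x) = c^2 * qf M x" by (simp add: qf_bf power2_eq_square)
lemma qf_zero[simp]: "qf M 0 = 0" by (simp add: qf_bf)

lemma qf_add: assumes "sym_mat M" shows "qf M (x + y) = qf M x + 2 * bf M x y + qf M y"
  using bf_sym[OF assms, of x y] by (simp add: qf_bf)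

lemma outer_mult: "outer a c *v y = (c \<bullet> y) *\<^sub>R a"
  by (simp add: outer_def matrix_vector_mult_def vec_eq_iff inner_vec_def sum_distrib_left mult.commute mult.left_commute)

lemma transpose_outer: "transpose (outer a c) = outer c a"
  by (simp add: outer_def transpose_def vec_eq_iff)

lemma sym_outer[simp]: "sym_mat (outer x x)"
  by (simp add: sym_mat_def transpose_outer)

lemma qf_outer[simp]: "qf (outer x x) y = (x \<bullet> y)^2"
  by (simp add: qf_def outer_mult power2_eq_square inner_commute)

lemma mat_inner_outer[simp]: "mat_inner M (outer x x) = qf M x"
  by (simp add: mat_inner_def trace_def matrix_matrix_mult_def outer_def qf_def
      matrix_vector_mult_def inner_vec_def sum_distrib_left mult.commute mult.left_commute)

lemma mat_inner_add[simp]: "mat_inner M (A + B) = mat_inner M A + mat_inner M B"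
  by (simp add: mat_inner_def trace_def matrix_matrix_mult_def sum.distrib distrib_left)

lemma mat_inner_scale[simp]: "mat_inner M (c *\<^sub>R A) = c * mat_inner M A"
  by (simp add: mat_inner_def trace_def matrix_matrix_mult_def sum_distrib_left mult.left_commute)

lemma mat_inner_diff[simp]: "mat_inner M (A - B) = mat_inner M A - mat_inner M B"
  by (simp add: mat_inner_def trace_def matrix_matrix_mult_def sum_subtractf right_diff_distrib)

lemma mat_inner_zero[simp]: "mat_inner M 0 = 0"
  by (simp add: mat_inner_def trace_def matrix_matrix_mult_def)

definition osum :: "(real^'n) list \<Rightarrow> real^'n^'n" where
  "osum xs = sum_list (map (\<lambda>x. outer x x) xs)"

lemma osum_Nil[simp]: "osum [] = 0" by (simp add: osum_def)
lemma osum_Cons[simp]: "osum (x # xs) = outer x x + osum xs" by (simp add: osum_def)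
lemma osum_append[simp]: "osum (xs @ ys) = osum xs + osum ys" by (simp add: osum_def)

lemma mat_inner_osum: "mat_inner M (osum xs) = sum_list (map (qf M) xs)"
  by (induction xs) auto

lemma qf_zeromat[simp]: "qf 0 x = 0" by (simp add: qf_def)

lemma qf_osum: "qf (osum xs) y = sum_list (map (\<lambda>x. (x \<bullet> y)^2) xs)"
  by (induction xs) auto

lemma osum_mult: "osum xs *v y = sum_list (map (\<lambda>x. (x \<bullet> y) *\<^sub>R x) xs)"
  by (induction xs) (auto simp: matrix_vector_mult_add_rdistrib outer_mult inner_commute)

lemma sym_add: "sym_mat A \<Longrightarrow> sym_mat B \<Longrightarrow> sym_mat (A + B)"
  by (simp add: sym_mat_def transpose_def vec_eq_iff)
lemma sym_diff: "sym_mat A \<Longrightarrow> sym_mat B \<Longrightarrow> sym_mat (A - B)"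
  by (simp add: sym_mat_def transpose_def vec_eq_iff)
lemma sym_scale: "sym_mat A \<Longrightarrow> sym_mat (c *\<^sub>R A)"
  by (simp add: sym_mat_def transpose_def vec_eq_iff)
lemma sym_zero[simp]: "sym_mat 0"
  by (simp add: sym_mat_def transpose_def vec_eq_iff)

lemma sym_osum[simp]: "sym_mat (osum xs)"
  by (induction xs) (auto intro: sym_add)

lemma psd_qf: "psd A \<longleftrightarrow> sym_mat A \<and> (\<forall>x. qf A x \<ge> 0)"
  by (simp add: psd_def qf_def)

lemma psd_osum[simp]: "psd (osum xs)"
  unfolding psd_qf qf_osum by (auto intro!: sum_list_nonneg)

lemma psd_add: "psd A \<Longrightarrow> psd B \<Longrightarrow> psd (A + B)"
  by (auto simp: psd_qf intro: sym_add add_nonneg_nonneg)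

lemma sym_Sym[simp]: "sym_mat (Sym M)"
  by (simp add: Sym_def sym_mat_def transpose_def vec_eq_iff)

lemma qf_Sym_outer: "qf (Sym (outer a c)) x = (a \<bullet> x) * (c \<bullet> x)"
proof -
  have "qf (outer a c) x = (a \<bullet> x) * (c \<bullet> x)"
    by (simp add: qf_def outer_mult inner_commute)
  moreover have "qf (transpose (outer a c)) x = (a \<bullet> x) * (c \<bullet> x)"
    by (simp add: transpose_outer qf_def outer_mult inner_commute)
  ultimately show ?thesis by (simp add: Sym_def)
qed

lemma Sym_outer_add: "Sym (outer (a + b) c) = Sym (outer a c) + Sym (outer b c)"
  by (simp add: Sym_def outer_def transpose_def vec_eq_iff algebra_simps)
lemma Sym_outer_scale: "Sym (outer (k *\<^sub>R a) c) = k *\<^sub>R Sym (outer a c)"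
  by (simp add: Sym_def outer_def transpose_def vec_eq_iff algebra_simps)

lemma rot_outer:
  assumes "c^2 + s^2 = (1::real)"
  shows "outer (c *\<^sub>R u + s *\<^sub>R v) (c *\<^sub>R u + s *\<^sub>R v)
       + outer ((- s) *\<^sub>R u + c *\<^sub>R v) ((- s) *\<^sub>R u + c *\<^sub>R v) = outer u u + outer v v"
proof -
  have "\<And>a b d e :: real. (c*a + s*d) * (c*b + s*e) + (-s*a + c*d) * (-s*b + c*e) = (c^2+s^2) * (a*b + d*e)"
    by (simp add: power2_eq_square algebra_simps)
  then show ?thesis using assms by (simp add: outer_def vec_eq_iff)
qed

lemma pair_qf_sum:
  assumes "outer a a + outer b b = outer u u + outer v v"
  shows "qf N a + qf N b = qf N u + qf N v"
proof -
  have "mat_inner N (outer a a + outer b b) = mat_inner N (outer u u + outer v v)" using assms by simp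
  then show ?thesis by simp
qed

lemma rot_ivt:
  fixes K :: "real^'n^'n"
  assumes "(qf K u \<le> y \<and> y \<le> qf K v) \<or> (qf K v \<le> y \<and> y \<le> qf K u)"
  shows "\<exists>a b. outer a a + outer b b = outer u u + outer v v \<and> qf K a = y"
proof -
  define f where "f = (\<lambda>t. qf K (cos t *\<^sub>R u + sin t *\<^sub>R v))"
  have fe: "f t = (cos t)^2 * qf K u + cos t * sin t * (bf K u v + bf K v u) + (sin t)^2 * qf K v" for t
    by (simp add: f_def qf_bf power2_eq_square algebra_simps)
  have cont: "continuous_on {0..pi/2} f"
    unfolding fe by (intro continuous_intros)
  have f0: "f 0 = qf K u" by (simp add: f_def)
  have f1: "f (pi/2) = qf K v" by (simp add: f_def)
  obtain t where "f t = y"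
    using assms IVT'[of f 0 y "pi/2"] IVT2'[of f "pi/2" y 0] cont f0 f1 by force
  moreover have "outer (cos t *\<^sub>R u + sin t *\<^sub>R v) (cos t *\<^sub>R u + sin t *\<^sub>R v)
       + outer ((- sin t) *\<^sub>R u + cos t *\<^sub>R v) ((- sin t) *\<^sub>R u + cos t *\<^sub>R v) = outer u u + outer v v"
    by (rule rot_outer) (simp add: add.commute)
  ultimately show ?thesis unfolding f_def
    by (intro exI[of _ "cos t *\<^sub>R u + sin t *\<^sub>R v"] exI[of _ "(- sin t) *\<^sub>R u + cos t *\<^sub>R v"]) simp
qed

lemma SZ:
  "sum_list (map (qf M) xs) \<ge> 0 \<Longrightarrow> \<exists>ys. osum ys = osum xs \<and> (\<forall>y\<in>set ys. qf M y \<ge> 0)"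
proof (induction "length xs" arbitrary: xs rule: less_induct)
  case less
  show ?case
  proof (cases "\<forall>x\<in>set xs. qf M x \<ge> 0")
    case True then show ?thesis by blast
  next
    case False
    then obtain x where x: "x \<in> set xs" "qf M x < 0" by auto
    define r where "r = remove1 x xs"
    have sx: "sum_list (map (qf M) xs) = qf M x + sum_list (map (qf M) r)"
      using x by (simp add: r_def sum_list_map_remove1)
    have ox: "osum xs = outer x x + osum r"
      using x by (simp add: r_def osum_def sum_list_map_remove1)
    have "\<exists>x'\<in>set r. qf M x' > 0"
    proof (rule ccontr)
      assume "\<not> ?thesis"
      then have "\<forall>z\<in>set r. qf M z \<le> 0" by (auto simp: not_less)
      then have "sum_list (map (qf M) r) \<le> 0" by (induction r) (auto intro: add_nonpos_nonpos)
      then show False using sx x less.prems by linarith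
    qed
    then obtain x' where x': "x' \<in> set r" "qf M x' > 0" by auto
    define r' where "r' = remove1 x' r"
    have sx': "sum_list (map (qf M) r) = qf M x' + sum_list (map (qf M) r')"
      using x' by (simp add: r'_def sum_list_map_remove1)
    have ox': "osum r = outer x' x' + osum r'"
      using x' by (simp add: r'_def osum_def sum_list_map_remove1)
    obtain a b where ab: "outer a a + outer b b = outer x x + outer x' x'" "qf M a = 0"
      using rot_ivt[of M x 0 x'] x x' by auto
    have qb: "qf M b = qf M x + qf M x'" using pair_qf_sum[OF ab(1), of M] ab(2) by simp
    have l1: "length r = length xs - 1" using x by (simp add: r_def length_remove1)
    have l2: "length r' = length r - 1" using x' by (simp add: r'_def length_remove1)
    have "length r > 0" using x' by (cases r) auto
    then have len: "length (b # r') < length xs" using l1 l2 by simp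
    have "sum_list (map (qf M) (b # r')) \<ge> 0" using qb sx sx' less.prems by simp
    then obtain ys where ys: "osum ys = osum (b # r')" "\<forall>y\<in>set ys. qf M y \<ge> 0"
      using less.hyps[OF len] by blast
    have "osum (a # ys) = (outer a a + outer b b) + osum r'"
      using ys(1) by (simp add: add.assoc)
    also have "\<dots> = osum xs" using ox ox' ab(1) by (simp add: add.assoc)
    finally have "osum (a # ys) = osum xs" .
    moreover have "\<forall>y\<in>set (a # ys). qf M y \<ge> 0" using ys ab by simp
    ultimately show ?thesis by blast
  qed
qed



lemma box_lemma:
  fixes s1 s2 A1 A2 al1 al2 :: real
  assumes "0 < al1" "0 < al2" "0 \<le> s1" "0 \<le> s2" "s1 \<noteq> 0 \<or> s2 \<noteq> 0"
    "s2 * A1 = s1 * A2" "al1 * A1 + al2 * A2 \<ge> 0" "al1 * (s1 - A1) + al2 * (s2 - A2) \<ge> 0"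
  shows "0 \<le> A1 \<and> A1 \<le> s1 \<and> 0 \<le> A2 \<and> A2 \<le> s2"
proof (cases "s1 = 0")
  case True
  then have "s2 > 0" using assms by auto
  then have "A1 = 0" using assms(6) True by simp
  then show ?thesis using assms True \<open>s2 > 0\<close>
    by (simp add: zero_le_mult_iff)
next
  case False
  then have s1p: "s1 > 0" using assms by auto
  define k where "k = al1 * s1 + al2 * s2"
  have kp: "k > 0" unfolding k_def using assms s1p by (simp add: add_pos_nonneg)
  have e1: "s1 * (al1 * A1 + al2 * A2) = A1 * k" unfolding k_def using assms(6)
    by (simp add: algebra_simps)
  have e2: "s1 * (al1 * (s1 - A1) + al2 * (s2 - A2)) = (s1 - A1) * k" unfolding k_def using assms(6)
    by (simp add: algebra_simps)
  have "A1 * k \<ge> 0" using e1 s1p assms(7) by (metis mult_nonneg_nonneg less_imp_le)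
  then have A1: "A1 \<ge> 0" using kp by (simp add: zero_le_mult_iff)
  have "(s1 - A1) * k \<ge> 0" using e2 s1p assms(8) by (metis mult_nonneg_nonneg less_imp_le)
  then have A1': "A1 \<le> s1" using kp by (simp add: zero_le_mult_iff)
  have "s1 * A2 \<ge> 0" using assms(6) A1 assms(4) by (metis mult_nonneg_nonneg)
  then have A2: "A2 \<ge> 0" using s1p by (simp add: zero_le_mult_iff)
  have "s1 * A2 \<le> s1 * s2" using assms(6) A1' assms(4)
    by (metis mult.commute mult_left_mono)
  then have "A2 \<le> s2" using s1p by simp
  then show ?thesis using A1 A1' A2 by simp
qed

lemma filter_remove1_len:
  "x \<in> set xs \<Longrightarrow> length (filter P xs) = (if P x then 1 else 0) + length (filter P (remove1 x xs))"
  by (induction xs) auto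

lemma phase2:
  assumes a1: "0 < al1" and a2: "0 < al2" and H: "\<And>x. al1 * qf M1 x + al2 * qf M2 x \<ge> 0"
  shows "(\<forall>x\<in>set xs. qf M1 x \<ge> 0) \<Longrightarrow> sum_list (map (qf M2) xs) \<ge> 0 \<Longrightarrow>
     \<exists>ys. osum ys = osum xs \<and> (\<forall>y\<in>set ys. qf M1 y \<ge> 0 \<and> qf M2 y \<ge> 0)"
proof (induction "length xs + length (filter (\<lambda>x. qf M2 x < 0) xs)" arbitrary: xs rule: less_induct)
  case less
  define nb where "nb = (\<lambda>zs. length (filter (\<lambda>x. qf M2 x < 0) zs))"
  show ?case
  proof (cases "\<forall>x\<in>set xs. qf M2 x \<ge> 0")
    case True then show ?thesis using less.prems(1) by blast
  next
    case False
    then obtain x where x: "x \<in> set xs" "qf M2 x < 0" by auto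
    define r where "r = remove1 x xs"
    have sx: "sum_list (map (qf M2) xs) = qf M2 x + sum_list (map (qf M2) r)"
      using x by (simp add: r_def sum_list_map_remove1)
    have ox: "osum xs = outer x x + osum r"
      using x by (simp add: r_def osum_def sum_list_map_remove1)
    have "\<exists>x'\<in>set r. qf M2 x' > 0"
    proof (rule ccontr)
      assume "\<not> ?thesis"
      then have "\<forall>z\<in>set r. qf M2 z \<le> 0" by (auto simp: not_less)
      then have "sum_list (map (qf M2) r) \<le> 0" by (induction r) (auto intro: add_nonpos_nonpos)
      then show False using sx x less.prems by linarith
    qed
    then obtain x' where x': "x' \<in> set r" "qf M2 x' > 0" by auto
    define r' where "r' = remove1 x' r"
    have sx': "sum_list (map (qf M2) r) = qf M2 x' + sum_list (map (qf M2) r')"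
      using x' by (simp add: r'_def sum_list_map_remove1)
    have ox': "osum r = outer x' x' + osum r'"
      using x' by (simp add: r'_def osum_def sum_list_map_remove1)
    have l1: "length r = length xs - 1" using x by (simp add: r_def length_remove1)
    have l2: "length r' = length r - 1" using x' by (simp add: r'_def length_remove1)
    have "length r > 0" using x' by (cases r) auto
    have nb1: "nb xs = 1 + nb r" using filter_remove1_len[OF x(1)] x unfolding nb_def r_def by simp
    have nb2: "nb r = nb r'" using filter_remove1_len[OF x'(1)] x' unfolding nb_def r'_def by simp
    have x'xs: "x' \<in> set xs" using x' unfolding r_def by (meson notin_set_remove1)
    have r'sub: "set r' \<subseteq> set xs" unfolding r'_def r_def
      by (meson dual_order.trans set_remove1_subset)
    have q1x: "qf M1 x \<ge> 0" "qf M1 x' \<ge> 0" using less.prems(1) x(1) x'xs by auto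
    define s1 where "s1 = qf M1 x + qf M1 x'"
    define s2 where "s2 = qf M2 x + qf M2 x'"
    show ?thesis
    proof (cases "s2 < 0")
      case True
      obtain a b where ab: "outer a a + outer b b = outer x x + outer x' x'" "qf M2 a = 0"
        using rot_ivt[of M2 x 0 x'] x x' by auto
      have qb: "qf M2 b = s2" using pair_qf_sum[OF ab(1), of M2] ab(2) s2_def by simp
      have "al1 * qf M1 a \<ge> 0" using H[of a] ab(2) by simp
      then have qa1: "qf M1 a \<ge> 0" using a1 by (simp add: zero_le_mult_iff)
      have "al1 * qf M1 b \<ge> - al2 * s2" using H[of b] qb by simp
      moreover have "- al2 * s2 > 0" using True a2 by (simp add: mult_pos_neg)
      ultimately have "al1 * qf M1 b > 0" by linarith
      then have qb1: "qf M1 b \<ge> 0" using a1 by (simp add: zero_less_mult_iff)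
      have m: "length (b # r') + nb (b # r') < length xs + nb xs"
        using l1 l2 \<open>length r > 0\<close> nb1 nb2 True qb unfolding nb_def by simp
      have "\<forall>z\<in>set (b # r'). qf M1 z \<ge> 0" using qb1 r'sub less.prems(1) by auto
      moreover have "sum_list (map (qf M2) (b # r')) \<ge> 0" using qb sx sx' less.prems(2) s2_def by simp
      ultimately obtain ys where ys: "osum ys = osum (b # r')" "\<forall>y\<in>set ys. qf M1 y \<ge> 0 \<and> qf M2 y \<ge> 0"
        using less.hyps[OF m[unfolded nb_def]] by blast
      have "osum (a # ys) = (outer a a + outer b b) + osum r'"
        using ys(1) by (simp add: add.assoc)
      also have "\<dots> = osum xs" using ox ox' ab(1) by (simp add: add.assoc)
      finally have "osum (a # ys) = osum xs" .
      moreover have "\<forall>y\<in>set (a # ys). qf M1 y \<ge> 0 \<and> qf M2 y \<ge> 0" using ys ab qa1 by simp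
      ultimately show ?thesis by blast
    next
      case False
      define K where "K = s2 *\<^sub>R M1 - s1 *\<^sub>R M2"
      have "qf K x + qf K x' = 0" unfolding K_def s1_def s2_def by (simp add: algebra_simps)
      then have "(qf K x \<le> 0 \<and> 0 \<le> qf K x') \<or> (qf K x' \<le> 0 \<and> 0 \<le> qf K x)" by linarith
      then obtain a b where ab: "outer a a + outer b b = outer x x + outer x' x'" "qf K a = 0"
        using rot_ivt[of K x 0 x'] by auto
      have qb1: "qf M1 b = s1 - qf M1 a" using pair_qf_sum[OF ab(1), of M1] s1_def by simp
      have qb2: "qf M2 b = s2 - qf M2 a" using pair_qf_sum[OF ab(1), of M2] s2_def by simp
      have s1nn: "s1 \<ge> 0" using q1x s1_def by simp
      have snz: "s1 \<noteq> 0 \<or> s2 \<noteq> 0"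
      proof (rule ccontr)
        assume "\<not> ?thesis"
        then have "qf M1 x = 0" using q1x s1_def by simp
        then show False using H[of x] mult_pos_neg[OF a2 x(2)] by simp
      qed
      have box: "0 \<le> qf M1 a \<and> qf M1 a \<le> s1 \<and> 0 \<le> qf M2 a \<and> qf M2 a \<le> s2"
        apply (rule box_lemma[OF a1 a2 s1nn _ snz])
        using False ab(2) H[of a] H[of b] qb1 qb2 unfolding K_def by auto
      have m: "length (a # b # r') + nb (a # b # r') < length xs + nb xs"
        using l1 l2 \<open>length r > 0\<close> nb1 nb2 box qb2 unfolding nb_def by simp
      have "\<forall>z\<in>set (a # b # r'). qf M1 z \<ge> 0" using box qb1 r'sub less.prems(1) by auto
      moreover have "sum_list (map (qf M2) (a # b # r')) \<ge> 0" using qb2 sx sx' less.prems(2) s2_def by simp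
      ultimately obtain ys where ys: "osum ys = osum (a # b # r')" "\<forall>y\<in>set ys. qf M1 y \<ge> 0 \<and> qf M2 y \<ge> 0"
        using less.hyps[OF m[unfolded nb_def]] by blast
      have "osum ys = (outer a a + outer b b) + osum r'"
        using ys(1) by (simp add: add.assoc)
      also have "\<dots> = osum xs" using ox ox' ab(1) by (simp add: add.assoc)
      finally show ?thesis using ys(2) by blast
    qed
  qed
qed



lemma quad_nonneg_disc:
  fixes a b c :: real
  assumes "\<And>t. a + 2 * t * b + t^2 * c \<ge> 0" "c \<ge> 0"
  shows "b^2 \<le> a * c"
proof (cases "c = 0")
  case True
  have "b = 0"
  proof (rule ccontr)
    assume "b \<noteq> 0"
    have "a + 2 * (-(a+1)/(2*b)) * b + (-(a+1)/(2*b))^2 * c \<ge> 0" by (rule assms(1))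
    then show False using True \<open>b \<noteq> 0\<close> by (simp add: field_simps)
  qed
  then show ?thesis using True by simp
next
  case False
  then have cp: "c > 0" using assms(2) by simp
  have "a + 2 * (-b/c) * b + (-b/c)^2 * c \<ge> 0" by (rule assms(1))
  then have "a - b^2 / c \<ge> 0" using cp by (simp add: power2_eq_square field_simps)
  then have "b^2 / c \<le> a" by simp
  then show ?thesis using cp by (simp add: field_simps mult.commute)
qed

lemma psd_cs:
  assumes "psd X"
  shows "(bf X x y)^2 \<le> qf X x * qf X y"
proof -
  have sym: "sym_mat X" and nn: "\<And>z. qf X z \<ge> 0" using assms by (auto simp: psd_qf)
  have "qf X x + 2 * t * bf X x y + t^2 * qf X y \<ge> 0" for t
    using nn[of "x + t *\<^sub>R y"] qf_add[OF sym, of x "t *\<^sub>R y"] by (simp add: mult.assoc)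
  then show ?thesis using quad_nonneg_disc nn by blast
qed

lemma bf_axis: "bf X (axis i 1) (axis j 1) = X $ i $ j"
  unfolding bf_def inner_axis' by (simp add: matrix_vector_mult_def axis_def if_distrib[of "\<lambda>x. _ * x"] cong: if_cong)

lemma qf_axis: "qf X (axis i 1) = X $ i $ i"
  by (simp add: qf_bf bf_axis)

lemma Xv_inner: "sym_mat X \<Longrightarrow> (X *v c) \<bullet> x = bf X x c"
  by (simp add: bf_def inner_commute)

lemma schur:
  assumes "psd X" "qf X c > 0"
  defines "y \<equiv> (1 / sqrt (qf X c)) *\<^sub>R (X *v c)"
  shows "psd (X - outer y y)" "(X - outer y y) *v c = 0"
proof -
  have sym: "sym_mat X" using assms by (simp add: psd_qf)
  define g where "g = qf X c"
  have gp: "g > 0" using assms g_def by simp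
  have yx: "y \<bullet> x = bf X x c / sqrt g" for x
    unfolding y_def g_def using Xv_inner[OF sym] by (simp add: divide_inverse mult.commute)
  have "qf (X - outer y y) x \<ge> 0" for x
  proof -
    have "(bf X x c)^2 \<le> qf X x * g" using psd_cs[OF assms(1)] g_def by simp
    then have "(bf X x c)^2 / g \<le> qf X x" using gp by (simp add: field_simps)
    moreover have "(y \<bullet> x)^2 = (bf X x c)^2 / g" using gp by (simp add: yx power_divide)
    ultimately show ?thesis by simp
  qed
  moreover have "sym_mat (X - outer y y)" using sym by (simp add: sym_diff)
  ultimately show "psd (X - outer y y)" by (simp add: psd_qf)
  have "y \<bullet> c = sqrt g"
    using yx[of c] gp bf_sym[OF sym] by (simp add: qf_bf g_def real_div_sqrt)
  then have "outer y y *v c = sqrt g *\<^sub>R y" by (simp add: outer_mult)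
  also have "\<dots> = X *v c" using gp unfolding y_def g_def by simp
  finally show "(X - outer y y) *v c = 0" by (simp add: matrix_vector_mult_diff_rdistrib)
qed

lemma psd_decomp: "psd X \<Longrightarrow> \<exists>xs. X = osum xs"
proof (induction "card {i. X $ i $ i \<noteq> 0}" arbitrary: X rule: less_induct)
  case less
  show ?case
  proof (cases "\<forall>i. X $ i $ i = 0")
    case True
    have "X $ i $ j = 0" for i j
      using psd_cs[OF less.prems, of "axis i 1" "axis j 1"] True by (simp add: bf_axis qf_axis)
    then have "X = osum []" by (simp add: vec_eq_iff)
    then show ?thesis by blast
  next
    case False
    then obtain i where i: "X $ i $ i \<noteq> 0" by auto
    have "X $ i $ i \<ge> 0" using less.prems by (metis psd_qf qf_axis)
    then have pos: "qf X (axis i 1) > 0" using i by (simp add: qf_axis)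
    define y where "y = (1 / sqrt (qf X (axis i 1))) *\<^sub>R (X *v axis i 1)"
    define X' where "X' = X - outer y y"
    have psd': "psd X'" using schur(1)[OF less.prems pos] unfolding X'_def y_def by simp
    have "X' *v axis i 1 = 0" using schur(2)[OF less.prems pos] unfolding X'_def y_def by simp
    then have X'ii: "X' $ i $ i = 0" by (metis qf_axis qf_def inner_zero_right)
    have X'jj: "X' $ j $ j = X $ j $ j - (y $ j)^2" for j
      by (simp add: X'_def outer_def power2_eq_square)
    have "X' $ j $ j \<ge> 0" for j using psd' by (metis psd_qf qf_axis)
    then have sub: "{j. X' $ j $ j \<noteq> 0} \<subseteq> {j. X $ j $ j \<noteq> 0} - {i}"
    proof (intro subsetI)
      fix j assume "j \<in> {j. X' $ j $ j \<noteq> 0}"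
      then have j: "X' $ j $ j \<noteq> 0" by simp
      then have "j \<noteq> i" using X'ii by auto
      moreover have "X $ j $ j \<noteq> 0"
      proof
        assume "X $ j $ j = 0"
        then have "X' $ j $ j \<le> 0" using X'jj[of j] by simp
        then show False using j \<open>\<And>j. X' $ j $ j \<ge> 0\<close>[of j] by simp
      qed
      ultimately show "j \<in> {j. X $ j $ j \<noteq> 0} - {i}" by simp
    qed
    have "card {j. X' $ j $ j \<noteq> 0} < card {j. X $ j $ j \<noteq> 0}"
    proof -
      have "card {j. X' $ j $ j \<noteq> 0} \<le> card ({j. X $ j $ j \<noteq> 0} - {i})"
        by (rule card_mono[OF _ sub]) simp
      also have "\<dots> < card {j. X $ j $ j \<noteq> 0}"
        using i by (intro card_Diff1_less) auto
      finally show ?thesis .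
    qed
    then obtain xs where "X' = osum xs" using less.hyps psd' by blast
    then have "X = osum (y # xs)" unfolding X'_def by (simp add: algebra_simps)
    then show ?thesis by blast
  qed
qed



lemma sum_nonneg_zero:
  fixes f :: "'a \<Rightarrow> real"
  shows "(\<forall>y\<in>set ys. f y \<ge> 0) \<Longrightarrow> sum_list (map f ys) \<le> 0 \<Longrightarrow> y \<in> set ys \<Longrightarrow> f y = 0"
proof (induction ys)
  case Nil then show ?case by simp
next
  case (Cons a ys)
  have "sum_list (map f ys) \<ge> 0" using Cons.prems(1) by (intro sum_list_nonneg) auto
  then have "f a = 0" "sum_list (map f ys) \<le> 0" using Cons.prems by auto
  then show ?case using Cons by auto
qed

lemma sum_list_neg_real: "sum_list (map (\<lambda>y. - f y) ys) = - sum_list (map (f::'a \<Rightarrow> real) ys)"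
  by (induction ys) auto

lemma outer_scale: "outer (c *\<^sub>R x) (c *\<^sub>R x) = (c^2) *\<^sub>R outer x x"
  by (simp add: outer_def vec_eq_iff power2_eq_square algebra_simps)

definition R1 :: "(real^'n^'n) set" where "R1 = {outer x x | x. True}"

lemma good_in_T: "qf M1 y \<ge> 0 \<Longrightarrow> qf M2 y \<ge> 0 \<Longrightarrow> outer y y \<in> S2 M1 M2 \<inter> {outer x x | x. True}"
proof -
  assume "qf M1 y \<ge> 0" "qf M2 y \<ge> 0"
  moreover have "psd (outer y y)" using psd_osum[of "[y]"] by simp
  ultimately have "outer y y \<in> S2 M1 M2" by (simp add: S2_def)
  then show ?thesis by blast
qed

lemma T_scale:
  assumes "z \<in> S2 M1 M2 \<inter> {outer x x | x. True}" "c \<ge> 0"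
  shows "c *\<^sub>R z \<in> S2 M1 M2 \<inter> {outer x x | x. True}"
proof -
  obtain x where x: "z = outer x x" "qf M1 x \<ge> 0" "qf M2 x \<ge> 0"
    using assms(1) by (auto simp: S2_def)
  have "c *\<^sub>R z = outer (sqrt c *\<^sub>R x) (sqrt c *\<^sub>R x)"
    using assms(2) by (simp add: outer_scale x(1))
  moreover have "qf M1 (sqrt c *\<^sub>R x) \<ge> 0" "qf M2 (sqrt c *\<^sub>R x) \<ge> 0"
    using x assms(2) by auto
  ultimately show ?thesis using good_in_T[of M1 "sqrt c *\<^sub>R x" M2] by simp
qed

lemma hull_scale:
  assumes "z \<in> convex hull (S2 M1 M2 \<inter> {outer x x | x. True})" "c \<ge> 0"
  shows "c *\<^sub>R z \<in> convex hull (S2 M1 M2 \<inter> {outer x x | x. True})"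
proof -
  let ?T = "S2 M1 M2 \<inter> {outer x x | x. True}"
  have "c *\<^sub>R z \<in> (\<lambda>x. c *\<^sub>R x) ` (convex hull ?T)" using assms(1) by blast
  also have "\<dots> = convex hull ((\<lambda>x. c *\<^sub>R x) ` ?T)" by (simp add: convex_hull_scaling)
  also have "\<dots> \<subseteq> convex hull ?T"
    by (rule hull_mono) (use T_scale assms(2) in blast)
  finally show ?thesis .
qed

lemma decomp_in_hull:
  "(\<forall>y\<in>set ys. qf M1 y \<ge> 0 \<and> qf M2 y \<ge> 0) \<Longrightarrow> osum ys \<in> convex hull (S2 M1 M2 \<inter> {outer x x | x. True})"
proof (induction ys)
  case Nil
  have "outer 0 0 \<in> S2 M1 M2 \<inter> {outer x x | x. True}" by (rule good_in_T) auto
  moreover have "outer (0::real^'a) 0 = 0" by (simp add: outer_def vec_eq_iff)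
  ultimately show ?case by (simp add: hull_inc)
next
  case (Cons y ys)
  let ?T = "S2 M1 M2 \<inter> {outer x x | x. True}"
  have a: "2 *\<^sub>R outer y y \<in> convex hull ?T"
    using Cons.prems T_scale[OF good_in_T, of M1 y M2 2] by (simp add: hull_inc)
  have b: "2 *\<^sub>R osum ys \<in> convex hull ?T"
    using Cons hull_scale[of "osum ys" M1 M2 2] by simp
  have "(1/2) *\<^sub>R (2 *\<^sub>R outer y y) + (1/2) *\<^sub>R (2 *\<^sub>R osum ys) \<in> convex hull ?T"
    by (rule convexD[OF convex_convex_hull a b]) auto
  then show ?case by simp
qed

lemma convex_S2: "convex (S2 M1 M2)"
proof (rule convexI)
  fix X Y :: "real^'a^'a" and u v :: real
  assume "X \<in> S2 M1 M2" "Y \<in> S2 M1 M2" "0 \<le> u" "0 \<le> v" "u + v = 1"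
  then show "u *\<^sub>R X + v *\<^sub>R Y \<in> S2 M1 M2"
    by (auto simp: S2_def psd_qf intro!: sym_add sym_scale add_nonneg_nonneg mult_nonneg_nonneg)
qed

lemma decomp_ROG:
  assumes "\<And>X. X \<in> S2 M1 M2 \<Longrightarrow> \<exists>ys. X = osum ys \<and> (\<forall>y\<in>set ys. qf M1 y \<ge> 0 \<and> qf M2 y \<ge> 0)"
  shows "ROG (S2 M1 M2)"
  unfolding ROG_def
proof
  show "S2 M1 M2 \<subseteq> convex hull (S2 M1 M2 \<inter> {outer x x |x. True})"
    using assms decomp_in_hull by blast
  show "convex hull (S2 M1 M2 \<inter> {outer x x |x. True}) \<subseteq> S2 M1 M2"
    by (rule hull_minimal) (auto simp: convex_S2)
qed

lemma suff_i:
  assumes "psd (al1 *\<^sub>R M1 + al2 *\<^sub>R M2)" "(al1, al2) \<noteq> (0, 0)" "X \<in> S2 M1 M2"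
  shows "\<exists>ys. X = osum ys \<and> (\<forall>y\<in>set ys. qf M1 y \<ge> 0 \<and> qf M2 y \<ge> 0)"
proof -
  have H: "al1 * qf M1 x + al2 * qf M2 x \<ge> 0" for x
    using assms(1) by (auto simp: psd_qf)
  have psdX: "psd X" and s1: "mat_inner M1 X \<ge> 0" and s2: "mat_inner M2 X \<ge> 0"
    using assms(3) by (auto simp: S2_def)
  obtain xs where xs: "X = osum xs" using psd_decomp[OF psdX] by blast
  have S: "sum_list (map (qf M) ys) = mat_inner M X" if "osum ys = X" for M ys
    using that by (metis mat_inner_osum)
  show ?thesis
  proof (cases "al1 > 0")
    case a1: True
    show ?thesis
    proof (cases "al2 > 0")
      case True
      obtain ys where ys: "osum ys = osum xs" "\<forall>y\<in>set ys. qf M1 y \<ge> 0"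
        using SZ[of M1 xs] S[where M=M1 and ys=xs] xs s1 by auto
      obtain zs where zs: "osum zs = osum ys" "\<forall>y\<in>set zs. qf M1 y \<ge> 0 \<and> qf M2 y \<ge> 0"
        using phase2[OF a1 True H, of ys] ys S[where M=M2 and ys=ys] xs s2 by auto
      then show ?thesis using zs ys xs by (intro exI[of _ zs]) auto
    next
      case False
      obtain ys where ys: "osum ys = osum xs" "\<forall>y\<in>set ys. qf M2 y \<ge> 0"
        using SZ[of M2 xs] S[where M=M2 and ys=xs] xs s2 by auto
      have "qf M1 y \<ge> 0" if "y \<in> set ys" for y
      proof -
        have "al1 * qf M1 y \<ge> - al2 * qf M2 y" using H[of y] by simp
        moreover have "- al2 * qf M2 y \<ge> 0" using False ys(2) that by (simp add: mult_nonpos_nonneg)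
        ultimately have "al1 * qf M1 y \<ge> 0" by linarith
        then show ?thesis using a1 by (simp add: zero_le_mult_iff)
      qed
      then show ?thesis using ys xs by (intro exI[of _ ys]) auto
    qed
  next
    case na1: False
    show ?thesis
    proof (cases "al2 > 0")
      case True
      obtain ys where ys: "osum ys = osum xs" "\<forall>y\<in>set ys. qf M1 y \<ge> 0"
        using SZ[of M1 xs] S[where M=M1 and ys=xs] xs s1 by auto
      have "qf M2 y \<ge> 0" if "y \<in> set ys" for y
      proof -
        have "al2 * qf M2 y \<ge> - al1 * qf M1 y" using H[of y] by simp
        moreover have "- al1 * qf M1 y \<ge> 0" using na1 ys(2) that by (simp add: mult_nonpos_nonneg)
        ultimately have "al2 * qf M2 y \<ge> 0" by linarith
        then show ?thesis using True by (simp add: zero_le_mult_iff)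
      qed
      then show ?thesis using ys xs by (intro exI[of _ ys]) auto
    next
      case na2: False
      have P0: "al1 * qf M1 y + al2 * qf M2 y = 0" if "osum ys = X" "y \<in> set ys" for ys y
      proof -
        have "sum_list (map (\<lambda>y. al1 * qf M1 y + al2 * qf M2 y) ys) = al1 * mat_inner M1 X + al2 * mat_inner M2 X"
          using S[OF that(1), where M=M1] S[OF that(1), where M=M2]
          by (simp add: sum_list_addf sum_list_const_mult)
        also have "\<dots> \<le> 0" using na1 na2 s1 s2 by (simp add: mult_nonpos_nonneg add_nonpos_nonpos)
        finally show ?thesis using sum_nonneg_zero[where ys=ys and f="\<lambda>y. al1 * qf M1 y + al2 * qf M2 y"] H that(2) by blast
      qed
      show ?thesis
      proof (cases "al1 = 0")
        case True
        then have a2n: "al2 < 0" using na2 assms(2) by auto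
        obtain ys where ys: "osum ys = osum xs" "\<forall>y\<in>set ys. qf M1 y \<ge> 0"
          using SZ[of M1 xs] S[where M=M1 and ys=xs] xs s1 by auto
        have "qf M2 y = 0" if "y \<in> set ys" for y using P0[of ys y] ys xs that True a2n by simp
        then show ?thesis using ys xs by (intro exI[of _ ys]) auto
      next
        case False
        then have a1n: "al1 < 0" using na1 by simp
        obtain ys where ys: "osum ys = osum xs" "\<forall>y\<in>set ys. qf M2 y \<ge> 0"
          using SZ[of M2 xs] S[where M=M2 and ys=xs] xs s2 by auto
        have np: "- qf M1 y \<ge> 0" if "y \<in> set ys" for y
        proof -
          have "al1 * qf M1 y = - al2 * qf M2 y" using P0[of ys y] ys xs that by simp
          also have "\<dots> \<ge> 0" using na2 ys(2) that by (simp add: mult_nonpos_nonneg)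
          finally have "al1 * qf M1 y \<ge> 0" .
          then have "qf M1 y \<le> 0" using a1n by (simp add: zero_le_mult_iff)
          then show ?thesis by simp
        qed
        have "sum_list (map (\<lambda>y. - qf M1 y) ys) \<le> 0"
          using S[where M=M1 and ys=ys] ys xs s1 by (simp add: sum_list_neg_real)
        then have "- qf M1 y = 0" if "y \<in> set ys" for y
          using sum_nonneg_zero[where ys=ys and f="\<lambda>y. - qf M1 y"] np that by blast
        then show ?thesis using ys xs by (intro exI[of _ ys]) auto
      qed
    qed
  qed
qed

lemma inner_osum_mult: "a \<bullet> (osum xs *v c) = sum_list (map (\<lambda>x. (a \<bullet> x) * (c \<bullet> x)) xs)"
  by (induction xs) (simp_all add: matrix_vector_mult_add_rdistrib outer_mult inner_add_right inner_commute mult.commute)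

lemma suff_ii:
  assumes "M1 = Sym (outer a c)" "M2 = Sym (outer b c)" "X \<in> S2 M1 M2"
  shows "\<exists>ys. X = osum ys \<and> (\<forall>y\<in>set ys. qf M1 y \<ge> 0 \<and> qf M2 y \<ge> 0)"
proof -
  have psdX: "psd X" and s1: "mat_inner M1 X \<ge> 0" and s2: "mat_inner M2 X \<ge> 0"
    using assms(3) by (auto simp: S2_def)
  have q1: "qf M1 x = (a \<bullet> x) * (c \<bullet> x)" and q2: "qf M2 x = (b \<bullet> x) * (c \<bullet> x)" for x
    unfolding assms(1,2) by (rule qf_Sym_outer)+
  have q1f: "qf M1 = (\<lambda>x. (a \<bullet> x) * (c \<bullet> x))" and q2f: "qf M2 = (\<lambda>x. (b \<bullet> x) * (c \<bullet> x))"
    using q1 q2 by auto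
  obtain xs where xs: "X = osum xs" using psd_decomp[OF psdX] by blast
  have zero_ok: "\<forall>y\<in>set ys. qf M1 y \<ge> 0 \<and> qf M2 y \<ge> 0" if "qf (osum ys) c = 0" for ys
  proof
    fix y assume y: "y \<in> set ys"
    have "sum_list (map (\<lambda>x. (x \<bullet> c)^2) ys) = 0" using that unfolding qf_osum .
    then have "sum_list (map (\<lambda>x. (x \<bullet> c)^2) ys) \<le> 0" by simp
    moreover have "\<forall>y\<in>set ys. (\<lambda>x. (x \<bullet> c)^2) y \<ge> 0" by simp
    ultimately have "(\<lambda>x. (x \<bullet> c)^2) y = 0" using sum_nonneg_zero[where ys=ys and f="\<lambda>x. (x \<bullet> c)^2"] y by blast
    then have "(y \<bullet> c)^2 = 0" by simp
    then show "qf M1 y \<ge> 0 \<and> qf M2 y \<ge> 0" by (simp add: q1 q2 inner_commute)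
  qed
  have gnn: "qf X c \<ge> 0" using psdX by (simp add: psd_qf)
  show ?thesis
  proof (cases "qf X c = 0")
    case True
    then show ?thesis using zero_ok xs by blast
  next
    case False
    then have gp: "qf X c > 0" using gnn by simp
    define g where "g = qf X c"
    define y where "y = (1 / sqrt g) *\<^sub>R (X *v c)"
    have psdR: "psd (X - outer y y)" and Rc: "(X - outer y y) *v c = 0"
      using schur[OF psdX gp] unfolding y_def g_def by auto
    obtain rs where rs: "X - outer y y = osum rs" using psd_decomp[OF psdR] by blast
    have "qf (osum rs) c = 0" using Rc rs by (simp add: qf_def)
    then have rsok: "\<forall>y\<in>set rs. qf M1 y \<ge> 0 \<and> qf M2 y \<ge> 0" by (rule zero_ok)
    have sym: "sym_mat X" using psdX by (simp add: psd_qf)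
    have cy: "c \<bullet> y = sqrt g"
    proof -
      have "c \<bullet> (X *v c) = g" by (simp add: g_def qf_def)
      then show ?thesis using gp unfolding y_def g_def by (simp add: real_div_sqrt)
    qed
    have ay: "a \<bullet> y \<ge> 0"
    proof -
      have "a \<bullet> (X *v c) = mat_inner M1 X"
        using xs by (simp add: inner_osum_mult mat_inner_osum q1f)
      then show ?thesis using s1 gp unfolding y_def g_def by simp
    qed
    have by': "b \<bullet> y \<ge> 0"
    proof -
      have "b \<bullet> (X *v c) = mat_inner M2 X"
        using xs by (simp add: inner_osum_mult mat_inner_osum q2f)
      then show ?thesis using s2 gp unfolding y_def g_def by simp
    qed
    have "qf M1 y \<ge> 0" "qf M2 y \<ge> 0" using ay by' cy gp unfolding g_def
      by (auto simp: q1 q2 inner_commute)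
    moreover have "X = osum (y # rs)" using rs by (simp add: algebra_simps)
    ultimately show ?thesis using rsok by (intro exI[of _ "y # rs"]) auto
  qed
qed

lemma sufficiency:
  assumes "(\<exists>al1 al2::real. (al1, al2) \<noteq> (0, 0) \<and> psd (al1 *\<^sub>R M1 + al2 *\<^sub>R M2)) \<or>
     (\<exists>a b c :: real^'n. M1 = Sym (outer a c) \<and> M2 = Sym (outer b c))"
  shows "ROG (S2 M1 M2)"
proof (rule decomp_ROG)
  fix X assume X: "X \<in> S2 M1 M2"
  show "\<exists>ys. X = osum ys \<and> (\<forall>y\<in>set ys. qf M1 y \<ge> 0 \<and> qf M2 y \<ge> 0)"
    using assms
  proof
    assume "\<exists>al1 al2::real. (al1, al2) \<noteq> (0, 0) \<and> psd (al1 *\<^sub>R M1 + al2 *\<^sub>R M2)"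
    then obtain al1 al2 where "(al1, al2) \<noteq> (0::real, 0::real)" "psd (al1 *\<^sub>R M1 + al2 *\<^sub>R M2)" by blast
    then show ?thesis using suff_i X by blast
  next
    assume "\<exists>a b c :: real^'n. M1 = Sym (outer a c) \<and> M2 = Sym (outer b c)"
    then obtain a b c where "M1 = Sym (outer a c)" "M2 = Sym (outer b c)" by blast
    then show ?thesis using suff_ii X by blast
  qed
qed



lemma span2: "y \<in> span {u, v} \<Longrightarrow> \<exists>s t. y = s *\<^sub>R u + t *\<^sub>R v"
proof -
  assume "y \<in> span {u, v}"
  then obtain k where "y - k *\<^sub>R u \<in> span {v}" by (auto simp: span_insert)
  then obtain t where "y - k *\<^sub>R u = t *\<^sub>R v" by (auto simp: span_singleton)
  then have "y = k *\<^sub>R u + t *\<^sub>R v" by (simp add: algebra_simps)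
  then show ?thesis by blast
qed

lemma qf_comb:
  assumes "sym_mat M"
  shows "qf M (s *\<^sub>R u + t *\<^sub>R v) = s^2 * qf M u + 2 * s * t * bf M u v + t^2 * qf M v"
  using qf_add[OF assms, of "s *\<^sub>R u" "t *\<^sub>R v"] by simp

lemma hull_to_list_aux:
  "set L \<subseteq> S2 M1 M2 \<inter> {outer x x | x. True} \<Longrightarrow> (\<forall>v\<in>set L. u v \<ge> (0::real)) \<Longrightarrow>
   \<exists>ys. sum_list (map (\<lambda>v. u v *\<^sub>R v) L) = osum ys \<and> (\<forall>y\<in>set ys. qf M1 y \<ge> 0 \<and> qf M2 y \<ge> 0)"
proof (induction L)
  case Nil
  then show ?case by (intro exI[of _ "[]"]) simp
next
  case (Cons v L)
  then obtain ys where ys: "sum_list (map (\<lambda>v. u v *\<^sub>R v) L) = osum ys" "\<forall>y\<in>set ys. qf M1 y \<ge> 0 \<and> qf M2 y \<ge> 0"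
    by auto
  obtain x where x: "v = outer x x" "qf M1 x \<ge> 0" "qf M2 x \<ge> 0"
    using Cons.prems(1) by (auto simp: S2_def)
  have uv: "u v \<ge> 0" using Cons.prems(2) by simp
  have "u v *\<^sub>R v = outer (sqrt (u v) *\<^sub>R x) (sqrt (u v) *\<^sub>R x)"
    using uv by (simp add: outer_scale x(1))
  moreover have "qf M1 (sqrt (u v) *\<^sub>R x) \<ge> 0" "qf M2 (sqrt (u v) *\<^sub>R x) \<ge> 0"
    using x uv by auto
  ultimately show ?case using ys
    by (intro exI[of _ "sqrt (u v) *\<^sub>R x # ys"]) auto
qed

lemma hull_to_list:
  assumes "X \<in> convex hull (S2 M1 M2 \<inter> {outer x x | x. True})"
  shows "\<exists>ys. X = osum ys \<and> (\<forall>y\<in>set ys. qf M1 y \<ge> 0 \<and> qf M2 y \<ge> 0)"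
proof -
  obtain F u where F: "finite F" "F \<subseteq> S2 M1 M2 \<inter> {outer x x | x. True}" "\<forall>x\<in>F. 0 \<le> u x"
      "sum (\<lambda>v. u v *\<^sub>R v) F = X"
    using assms unfolding convex_hull_explicit by blast
  obtain L where L: "set L = F" "distinct L" using finite_distinct_list[OF F(1)] by blast
  have "X = sum_list (map (\<lambda>v. u v *\<^sub>R v) L)"
    using F(4) L sum.distinct_set_conv_list[OF L(2), of "\<lambda>v. u v *\<^sub>R v"] by simp
  then show ?thesis using hull_to_list_aux[of L M1 M2 u] F L by auto
qed

lemma rog_decomp:
  assumes "ROG (S2 M1 M2)" "X \<in> S2 M1 M2"
  shows "\<exists>ys. X = osum ys \<and> (\<forall>y\<in>set ys. qf M1 y \<ge> 0 \<and> qf M2 y \<ge> 0)"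
  using assms hull_to_list unfolding ROG_def by blast

lemma le_sum_sq:
  fixes f :: "'a \<Rightarrow> real"
  shows "(\<forall>z\<in>set ys. f z \<ge> 0) \<Longrightarrow> y \<in> set ys \<Longrightarrow> f y \<le> sum_list (map f ys)"
proof (induction ys)
  case Nil then show ?case by simp
next
  case (Cons a ys)
  have "sum_list (map f ys) \<ge> 0" using Cons.prems(1) by (intro sum_list_nonneg) auto
  then show ?case using Cons by auto
qed

lemma rog_P:
  assumes rog: "ROG (S2 M1 M2)" and s1: "sym_mat M1" and s2: "sym_mat M2"
    and e1: "qf M1 u + qf M1 v = 0" and e2: "qf M2 u + qf M2 v = 0"
  shows "qf M1 u * bf M2 u v = qf M2 u * bf M1 u v"
proof (rule ccontr)
  assume D: "qf M1 u * bf M2 u v \<noteq> qf M2 u * bf M1 u v"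
  define X where "X = osum [u, v]"
  have psdX: "psd X" unfolding X_def by (rule psd_osum)
  have "X \<in> S2 M1 M2" using e1 e2 psdX unfolding S2_def by (simp add: X_def)
  then obtain ys where ys: "X = osum ys" "\<forall>y\<in>set ys. qf M1 y \<ge> 0 \<and> qf M2 y \<ge> 0"
    using rog_decomp[OF rog] by blast
  have z1: "qf M1 y = 0" if "y \<in> set ys" for y
  proof -
    have "sum_list (map (qf M1) ys) = mat_inner M1 X" using ys(1) by (simp add: mat_inner_osum)
    also have "\<dots> = 0" using e1 by (simp add: X_def)
    finally have "sum_list (map (qf M1) ys) = 0" .
    then show ?thesis using sum_nonneg_zero[where f="qf M1" and ys=ys] ys(2) that by auto
  qed
  have z2: "qf M2 y = 0" if "y \<in> set ys" for y
  proof -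
    have "sum_list (map (qf M2) ys) = mat_inner M2 X" using ys(1) by (simp add: mat_inner_osum)
    also have "\<dots> = 0" using e2 by (simp add: X_def)
    finally have "sum_list (map (qf M2) ys) = 0" .
    then show ?thesis using sum_nonneg_zero[where f="qf M2" and ys=ys] ys(2) that by auto
  qed
  have yu: "y \<bullet> u = 0" if y: "y \<in> set ys" for y
  proof -
    obtain p r where pr: "p \<in> span {u, v}" "\<And>w. w \<in> span {u, v} \<Longrightarrow> orthogonal r w" "y = p + r"
      using orthogonal_subspace_decomp_exists by metis
    have ru: "r \<bullet> u = 0" "r \<bullet> v = 0" "r \<bullet> p = 0"
      using pr(2)[of u] pr(2)[of v] pr(2)[OF pr(1)] by (auto simp: orthogonal_def span_base)
    have "qf X r = (u \<bullet> r)^2 + (v \<bullet> r)^2" by (simp add: X_def qf_osum)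
    then have "qf X r = 0" using ru by (simp add: inner_commute)
    moreover have "(y \<bullet> r)^2 \<le> qf X r"
      unfolding ys(1) qf_osum using le_sum_sq[where f="\<lambda>x. (x \<bullet> r)^2" and ys=ys] y by auto
    moreover have "y \<bullet> r = r \<bullet> r" using pr(3) ru by (simp add: inner_add_left inner_commute[of p r])
    ultimately have "(r \<bullet> r)^2 \<le> 0" by simp
    then have "r = 0" by simp
    then have "y = p" using pr(3) by simp
    then obtain s t where st: "y = s *\<^sub>R u + t *\<^sub>R v" using span2[OF pr(1)] by blast
    have q1y: "qf M1 y = (s^2 - t^2) * qf M1 u + 2 * s * t * bf M1 u v"
    proof -
      have "qf M1 v = - qf M1 u" using e1 by simp
      then show ?thesis using st qf_comb[OF s1, of s u t v] by (simp add: algebra_simps)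
    qed
    have q2y: "qf M2 y = (s^2 - t^2) * qf M2 u + 2 * s * t * bf M2 u v"
    proof -
      have "qf M2 v = - qf M2 u" using e2 by simp
      then show ?thesis using st qf_comb[OF s2, of s u t v] by (simp add: algebra_simps)
    qed
    define A where "A = s^2 - t^2"
    define B where "B = 2 * s * t"
    have eqs: "A * qf M1 u + B * bf M1 u v = 0" "A * qf M2 u + B * bf M2 u v = 0"
      using q1y q2y z1[OF y] z2[OF y] A_def B_def by auto
    have "A * (qf M1 u * bf M2 u v - qf M2 u * bf M1 u v) = 0"
    proof -
      have "A * (qf M1 u * bf M2 u v - qf M2 u * bf M1 u v)
          = bf M2 u v * (A * qf M1 u + B * bf M1 u v) - bf M1 u v * (A * qf M2 u + B * bf M2 u v)"
        by (simp add: algebra_simps)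
      then show ?thesis using eqs by simp
    qed
    then have A0: "A = 0" using D by simp
    have "B * (qf M1 u * bf M2 u v - qf M2 u * bf M1 u v) = 0"
    proof -
      have "B * (qf M1 u * bf M2 u v - qf M2 u * bf M1 u v)
          = qf M1 u * (A * qf M2 u + B * bf M2 u v) - qf M2 u * (A * qf M1 u + B * bf M1 u v)"
        by (simp add: algebra_simps)
      then show ?thesis using eqs by simp
    qed
    then have B0: "B = 0" using D by simp
    then have "s = 0 \<or> t = 0" using B_def by simp
    then have "s = 0 \<and> t = 0" using A0 A_def by auto
    then show ?thesis using st by simp
  qed
  have "qf X u = 0"
    unfolding ys(1) qf_osum using yu by (induction ys) (auto simp: inner_commute)
  moreover have "qf X u = (u \<bullet> u)^2 + (v \<bullet> u)^2" by (simp add: X_def qf_osum)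
  ultimately have "(u \<bullet> u)^2 = 0"
    by (smt (verit) zero_le_power2)
  then have "u = 0" by simp
  then show False using D by simp
qed



definition PP :: "real^'n^'n \<Rightarrow> real^'n^'n \<Rightarrow> bool" where
  "PP N1 N2 \<longleftrightarrow> (\<forall>u v. qf N1 u + qf N1 v = 0 \<longrightarrow> qf N2 u + qf N2 v = 0 \<longrightarrow>
      qf N1 u * bf N2 u v = qf N2 u * bf N1 u v)"

definition CH :: "real^'n^'n \<Rightarrow> real^'n^'n \<Rightarrow> real^'n \<Rightarrow> real^'n \<Rightarrow> bool" where
  "CH N1 N2 y1 y2 \<longleftrightarrow> sym_mat N1 \<and> sym_mat N2 \<and> PP N1 N2 \<and>
     qf N1 y1 = 0 \<and> qf N2 y1 = 0 \<and> qf N1 y2 = 0 \<and> qf N2 y2 = 0 \<and>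
     bf N1 y1 y2 = 1 \<and> bf N2 y1 y2 = 0"

lemma CH_swap: "CH N1 N2 y1 y2 \<Longrightarrow> CH N1 N2 y2 y1"
  unfolding CH_def using bf_sym by metis

lemma key:
  assumes ch: "CH N1 N2 y1 y2"
    and h1: "2*mu + 2*a*b + 2*a*bf N1 y1 x + 2*b*bf N1 y2 x + qf N1 x = 0"
    and h2: "2*a*bf N2 y1 x + 2*b*bf N2 y2 x + qf N2 x = 0"
  shows "mu * (bf N2 y1 x + mu * bf N2 y2 x) = 0"
proof -
  have s1: "sym_mat N1" and s2: "sym_mat N2" and P: "PP N1 N2"
    and n: "qf N1 y1 = 0" "qf N2 y1 = 0" "qf N1 y2 = 0" "qf N2 y2 = 0"
    and b: "bf N1 y1 y2 = 1" "bf N2 y1 y2 = 0"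
    using ch by (auto simp: CH_def)
  have nb: "bf N1 y1 y1 = 0" "bf N2 y1 y1 = 0" "bf N1 y2 y2 = 0" "bf N2 y2 y2 = 0"
    using n by (auto simp: qf_bf)
  have sb: "bf N1 y2 y1 = 1" "bf N2 y2 y1 = 0"
    "bf N1 x y1 = bf N1 y1 x" "bf N1 x y2 = bf N1 y2 x"
    "bf N2 x y1 = bf N2 y1 x" "bf N2 x y2 = bf N2 y2 x"
    using b bf_sym[OF s1] bf_sym[OF s2] by metis+
  define u where "u = y1 + mu *\<^sub>R y2"
  define v where "v = a *\<^sub>R y1 + b *\<^sub>R y2 + x"
  have qu1: "qf N1 u = 2 * mu" unfolding u_def qf_bf using nb sb b by simp
  have qu2: "qf N2 u = 0" unfolding u_def qf_bf using nb sb b by simp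
  have qv1: "qf N1 v = 2*a*b + 2*a*bf N1 y1 x + 2*b*bf N1 y2 x + qf N1 x"
    unfolding v_def qf_bf using nb sb b by (simp add: algebra_simps)
  have qv2: "qf N2 v = 2*a*bf N2 y1 x + 2*b*bf N2 y2 x + qf N2 x"
    unfolding v_def qf_bf using nb sb b by (simp add: algebra_simps)
  have buv: "bf N2 u v = bf N2 y1 x + mu * bf N2 y2 x"
    unfolding u_def v_def using nb sb b by (simp add: algebra_simps)
  have "qf N1 u + qf N1 v = 0" using qu1 qv1 h1 by simp
  moreover have "qf N2 u + qf N2 v = 0" using qu2 qv2 h2 by simp
  ultimately have "qf N1 u * bf N2 u v = qf N2 u * bf N1 u v" using P unfolding PP_def by blast
  then show ?thesis using qu1 qu2 buv by simp
qed

lemma two_values: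
  fixes g :: "real \<Rightarrow> real"
  assumes cont: "continuous_on UNIV g" and vals: "\<And>a. g a = 0 \<or> g a = k" and k: "k \<noteq> 0"
  shows "(\<forall>a. g a = 0) \<or> (\<forall>a. g a = k)"
proof (rule ccontr)
  assume "\<not> ?thesis"
  then obtain a0 a1 where a: "g a0 = 0" "g a1 = k" using vals by metis
  have conn: "connected (range g)" by (rule connected_continuous_image[OF cont connected_UNIV])
  have "k/2 \<in> range g"
  proof (cases "k > 0")
    case True
    show ?thesis
      by (rule connectedD_interval[OF conn, of "g a0" "g a1"]) (use a True in auto)
  next
    case False
    then have "k < 0" using k by simp
    show ?thesis
      by (rule connectedD_interval[OF conn, of "g a1" "g a0"]) (use a \<open>k < 0\<close> in auto)
  qed
  then obtain a2 where "g a2 = k/2" by auto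
  then show False using vals[of a2] k by auto
qed

lemma step1:
  assumes ch: "CH N1 N2 y1 y2"
  shows "bf N2 y1 x * bf N2 y2 x = 0"
proof (rule ccontr)
  assume "bf N2 y1 x * bf N2 y2 x \<noteq> 0"
  then have B1: "bf N2 y1 x \<noteq> 0" and B2: "bf N2 y2 x \<noteq> 0" by auto
  define B1v where "B1v = bf N2 y1 x"
  define B2v where "B2v = bf N2 y2 x"
  define C where "C = qf N2 x"
  define D1 where "D1 = bf N1 y1 x"
  define D2 where "D2 = bf N1 y2 x"
  define D where "D = qf N1 x"
  define bb where "bb = (\<lambda>a::real. - (C + 2*a*B1v) / (2*B2v))"
  define mu where "mu = (\<lambda>a. - (a * bb a) - a * D1 - bb a * D2 - D/2)"
  have B2v: "B2v \<noteq> 0" using B2 B2v_def by simp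
  have B1v: "B1v \<noteq> 0" using B1 B1v_def by simp
  have eq: "mu a * (B1v + mu a * B2v) = 0" for a
  proof -
    have "2 * a * B1v + 2 * bb a * B2v + C = 0" unfolding bb_def using B2v by (simp add: field_simps)
    moreover have "2 * mu a + 2 * a * bb a + 2 * a * D1 + 2 * bb a * D2 + D = 0" unfolding mu_def by simp
    ultimately show ?thesis using key[OF ch, of "mu a" a "bb a" x]
      unfolding B1v_def B2v_def C_def D1_def D2_def D_def by simp
  qed
  define k where "k = - B1v / B2v"
  have k: "k \<noteq> 0" unfolding k_def using B1v B2v by simp
  have vals: "mu a = 0 \<or> mu a = k" for a
  proof -
    have "mu a = 0 \<or> B1v + mu a * B2v = 0" using eq[of a] by simp
    then show ?thesis unfolding k_def using B2v by (auto simp: field_simps)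
  qed
  have cont: "continuous_on UNIV mu" unfolding mu_def bb_def using B2v by (intro continuous_intros) auto
  have const: "mu 1 + mu (-1) - 2 * mu 0 = 0" using two_values[OF cont vals k] by auto
  have "mu 1 + mu (-1) - 2 * mu 0 = 2 * B1v / B2v"
    unfolding mu_def bb_def using B2v by (simp add: field_simps)
  then show False using const B1v B2v by simp
qed

lemma three_pt:
  fixes A B C s :: real
  assumes "A + B*(s+1) + C*(s+1)^2 = 0" "A + B*(s+2) + C*(s+2)^2 = 0" "A + B*(s+3) + C*(s+3)^2 = 0"
  shows "A = 0"
proof -
  have e: "A + B * s + B + C * s * s + 2 * C * s + C = 0" "A + B * s + 2 * B + C * s * s + 4 * C * s + 4 * C = 0"
    "A + B * s + 3 * B + C * s * s + 6 * C * s + 9 * C = 0"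
    using assms by (simp_all add: power2_eq_square algebra_simps)
  then have "C = 0" by linarith
  then have "B = 0" using e by (simp add: \<open>C = 0\<close>)
  then show ?thesis using e \<open>C = 0\<close> by simp
qed

lemma qf_ext:
  assumes h: "\<And>x. e \<bullet> x \<noteq> 0 \<Longrightarrow> qf K x = 0" and e: "e \<noteq> 0"
  shows "qf K x = 0"
proof -
  define t0 where "t0 = - (e \<bullet> x) / (e \<bullet> e)"
  have ee: "e \<bullet> e > 0" using e by simp
  have f: "qf K x + (bf K x e + bf K e x) * t + qf K e * t^2 = 0" if "t \<noteq> t0" for t
  proof -
    have "e \<bullet> (x + t *\<^sub>R e) = e \<bullet> x + t * (e \<bullet> e)" by (simp add: inner_add_right)
    also have "\<dots> \<noteq> 0"
    proof
      assume "e \<bullet> x + t * (e \<bullet> e) = 0"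
      then have "t = t0" unfolding t0_def using ee by (simp add: field_simps)
      then show False using that by simp
    qed
    finally have "qf K (x + t *\<^sub>R e) = 0" using h by blast
    then show ?thesis by (simp add: qf_bf power2_eq_square algebra_simps)
  qed
  show ?thesis
    by (rule three_pt[where B="bf K x e + bf K e x" and C="qf K e" and s=t0]) (rule f, simp)+
qed

lemma sym_qf_zero:
  assumes "sym_mat K" "\<And>x. qf K x = 0"
  shows "K = 0"
proof -
  have "K $ i $ j = 0" for i j
  proof -
    have "qf K (axis i 1 + axis j 1) = qf K (axis i 1) + 2 * bf K (axis i 1) (axis j 1) + qf K (axis j 1)"
      by (rule qf_add[OF assms(1)])
    then show ?thesis using assms(2) by (simp add: bf_axis)
  qed
  then show ?thesis by (simp add: vec_eq_iff)
qed

lemma sym_qf_eq: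
  assumes "sym_mat K" "sym_mat L" "\<And>x. qf K x = qf L x"
  shows "K = L"
proof -
  have "K - L = 0" by (rule sym_qf_zero) (use assms in \<open>auto intro: sym_diff\<close>)
  then show ?thesis by simp
qed

lemma bf_Mv: "sym_mat N \<Longrightarrow> bf N y x = (N *v y) \<bullet> x"
  by (metis Xv_inner bf_sym)

lemma step2:
  assumes ch: "CH N1 N2 y1 y2" and z1: "N2 *v y1 = 0" and nz2: "N2 *v y2 \<noteq> 0"
  shows "\<exists>a b c. N1 = Sym (outer a c) \<and> N2 = Sym (outer b c)"
proof -
  have s1: "sym_mat N1" and s2: "sym_mat N2" using ch by (auto simp: CH_def)
  define c where "c = N1 *v y1"
  define e where "e = N2 *v y2"
  define f where "f = N1 *v y2"
  have D1: "bf N1 y1 x = c \<bullet> x" and B2: "bf N2 y2 x = e \<bullet> x" and D2: "bf N1 y2 x = f \<bullet> x"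
    and B1: "bf N2 y1 x = 0" for x
    using bf_Mv[OF s1] bf_Mv[OF s2] z1 unfolding c_def e_def f_def by auto
  have main: "qf N2 x = 2 * (c \<bullet> x) * (e \<bullet> x) \<and> qf N1 x = 2 * (c \<bullet> x) * (f \<bullet> x)"
    if ex: "e \<bullet> x \<noteq> 0" for x
  proof -
    define bb where "bb = - qf N2 x / (2 * (e \<bullet> x))"
    have h2: "2*a*bf N2 y1 x + 2*bb*bf N2 y2 x + qf N2 x = 0" for a
      unfolding bb_def B1 B2 using ex by (simp add: field_simps)
    define mu0 where "mu0 = - bb * (f \<bullet> x) - qf N1 x / 2"
    have "mu0 * (bf N2 y1 x + mu0 * bf N2 y2 x) = 0"
      by (rule key[OF ch _ h2[of 0]]) (simp add: mu0_def D2)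
    then have "mu0 * mu0 * (e \<bullet> x) = 0" by (simp add: B1 B2 algebra_simps)
    then have m0: "mu0 = 0" using ex by simp
    define mu1 where "mu1 = - bb - (c \<bullet> x) - bb * (f \<bullet> x) - qf N1 x / 2"
    have "mu1 * (bf N2 y1 x + mu1 * bf N2 y2 x) = 0"
      by (rule key[OF ch _ h2[of 1]]) (simp add: mu1_def D1 D2)
    then have "mu1 * mu1 * (e \<bullet> x) = 0" by (simp add: B1 B2 algebra_simps)
    then have m1: "mu1 = 0" using ex by simp
    have bbc: "bb = - (c \<bullet> x)" using m0 m1 unfolding mu0_def mu1_def by simp
    have "qf N2 x = 2 * (c \<bullet> x) * (e \<bullet> x)"
      using bbc ex unfolding bb_def by (simp add: field_simps)
    moreover have "qf N1 x = 2 * (c \<bullet> x) * (f \<bullet> x)"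
      using m0 bbc unfolding mu0_def by (simp add: field_simps)
    ultimately show ?thesis by simp
  qed
  have e0: "e \<noteq> 0" using nz2 e_def by simp
  have q2: "qf (N2 - Sym (outer (2 *\<^sub>R e) c)) x = 0" for x
    by (rule qf_ext[OF _ e0]) (use main in \<open>simp add: qf_Sym_outer\<close>)
  have q1: "qf (N1 - Sym (outer (2 *\<^sub>R f) c)) x = 0" for x
    by (rule qf_ext[OF _ e0]) (use main in \<open>simp add: qf_Sym_outer\<close>)
  have "N2 = Sym (outer (2 *\<^sub>R e) c)"
    by (rule sym_qf_eq[OF s2 sym_Sym]) (use q2 in simp)
  moreover have "N1 = Sym (outer (2 *\<^sub>R f) c)"
    by (rule sym_qf_eq[OF s1 sym_Sym]) (use q1 in simp)
  ultimately show ?thesis by blast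
qed

lemma step3:
  assumes ch: "CH N1 N2 y1 y2" and z1: "N2 *v y1 = 0" and z2: "N2 *v y2 = 0"
    and xp: "qf N2 xp > 0" and xm: "qf N2 xm < 0"
  shows False
proof -
  have s1: "sym_mat N1" and s2: "sym_mat N2" and P: "PP N1 N2"
    and n: "qf N1 y1 = 0" "qf N1 y2 = 0"
    and b: "bf N1 y1 y2 = 1"
    using ch by (auto simp: CH_def)
  define p where "p = (1 / sqrt (qf N2 xp)) *\<^sub>R xp"
  define m where "m = (1 / sqrt (- qf N2 xm)) *\<^sub>R xm"
  have qp: "qf N2 p = 1" unfolding p_def using xp by (simp add: power_divide)
  have qm: "qf N2 m = -1" unfolding m_def using xm by (simp add: power_divide)
  have z: "bf N2 y1 w = 0" "bf N2 y2 w = 0" "bf N2 w y1 = 0" "bf N2 w y2 = 0" for w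
    using bf_Mv[OF s2, of y1 w] bf_Mv[OF s2, of y2 w] bf_sym[OF s2, of w y1] bf_sym[OF s2, of w y2] z1 z2
    by auto
  have nb: "bf N1 y1 y1 = 0" "bf N1 y2 y2 = 0" using n by (auto simp: qf_bf)
  have sb: "bf N1 y2 y1 = 1" "bf N1 p y1 = bf N1 y1 p" "bf N1 p y2 = bf N1 y2 p"
    "bf N1 m y1 = bf N1 y1 m" "bf N1 m y2 = bf N1 y2 m" "bf N1 m p = bf N1 p m" "bf N2 m p = bf N2 p m"
    using b bf_sym[OF s1] bf_sym[OF s2] by metis+
  define e1 where "e1 = bf N1 y1 p"
  define e2 where "e2 = bf N1 y2 p"
  define f where "f = qf N1 p"
  define g1 where "g1 = bf N1 y1 m"
  define g2 where "g2 = bf N1 y2 m"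
  define h where "h = qf N1 m"
  define ka where "ka = bf N2 p m"
  define k where "k = bf N1 p m"
  define f' where "f' = f - 2 * e1 * e2"
  define h' where "h' = h - 2 * g1 * g2"
  define F where "F = f' + h'"
  define k' where "k' = k - e2 * g1 - e1 * g2"
  have gen: "(2 * lam + f') * ka = lam * (- lam - F / 2) + 1 + k'" for lam
  proof -
    define sg where "sg = - lam - F / 2"
    define u where "u = (lam - e2) *\<^sub>R y1 + (1 - e1) *\<^sub>R y2 + p"
    define v where "v = (1 - g2) *\<^sub>R y1 + (sg - g1) *\<^sub>R y2 + m"
    have qu1: "qf N1 u = 2 * lam + f'"
      unfolding u_def qf_bf f'_def f_def e1_def e2_def using nb sb b
      by (simp add: qf_bf algebra_simps)
    have qv1: "qf N1 v = 2 * sg + h'"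
      unfolding v_def qf_bf h'_def h_def g1_def g2_def using nb sb b
      by (simp add: qf_bf algebra_simps)
    have qu2: "qf N2 u = 1" unfolding u_def qf_bf using z qp by (simp add: qf_bf)
    have qv2: "qf N2 v = -1" unfolding v_def qf_bf using z qm by (simp add: qf_bf)
    have b2: "bf N2 u v = ka" unfolding u_def v_def ka_def using z by simp
    have b1: "bf N1 u v = lam * sg + 1 + k'"
      unfolding u_def v_def k'_def k_def e1_def e2_def g1_def g2_def using nb sb b
      by (simp add: algebra_simps)
    have "qf N1 u + qf N1 v = 0" using qu1 qv1 unfolding sg_def F_def by (simp add: field_simps)
    moreover have "qf N2 u + qf N2 v = 0" using qu2 qv2 by simp
    ultimately have "qf N1 u * bf N2 u v = qf N2 u * bf N1 u v" using P unfolding PP_def by blast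
    then show ?thesis using qu1 qu2 b1 b2 unfolding sg_def by simp
  qed
  have g0: "f' * ka = 1 + k'" using gen[of 0] by simp
  have g1': "2 * ka + f' * ka = - 1 - F / 2 + 1 + k'" using gen[of 1] by (simp add: algebra_simps)
  have g2': "- 2 * ka + f' * ka = - 1 + F / 2 + 1 + k'" using gen[of "-1"] by (simp add: algebra_simps)
  show False using g0 g1' g2' by linarith
qed

lemma core:
  assumes ch: "CH N1 N2 y1 y2" and xp: "qf N2 xp > 0" and xm: "qf N2 xm < 0"
  shows "\<exists>a b c. N1 = Sym (outer a c) \<and> N2 = Sym (outer b c)"
proof -
  have s2: "sym_mat N2" using ch by (simp add: CH_def)
  define a where "a = N2 *v y1"
  define b where "b = N2 *v y2"
  have prod: "(a \<bullet> x) * (b \<bullet> x) = 0" for x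
    using step1[OF ch, of x] bf_Mv[OF s2] unfolding a_def b_def by simp
  have "a = 0 \<or> b = 0"
  proof (rule ccontr)
    assume "\<not> ?thesis"
    then have an: "a \<noteq> 0" and bn: "b \<noteq> 0" by auto
    have "(a \<bullet> a) * (b \<bullet> a) = 0" by (rule prod)
    then have ab: "a \<bullet> b = 0" using an by (simp add: inner_commute)
    have "(a \<bullet> (a + b)) * (b \<bullet> (a + b)) = 0" by (rule prod)
    then have "(a \<bullet> a) * (b \<bullet> b) = 0" using ab by (simp add: inner_add_right inner_commute)
    then show False using an bn by simp
  qed
  then show ?thesis
  proof
    assume a0: "a = 0"
    show ?thesis
    proof (cases "b = 0")
      case True
      then show ?thesis using step3[OF ch _ _ xp xm] a0 unfolding a_def b_def by blast
    next
      case False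
      then show ?thesis using step2[OF ch] a0 unfolding a_def b_def by blast
    qed
  next
    assume b0: "b = 0"
    show ?thesis
    proof (cases "a = 0")
      case True
      then show ?thesis using step3[OF ch _ _ xp xm] b0 unfolding a_def b_def by blast
    next
      case False
      then show ?thesis using step2[OF CH_swap[OF ch]] b0 unfolding a_def b_def by blast
    qed
  qed
qed



lemma qf_inner_outer: "qf M x = M \<bullet> outer x x"
proof -
  have "qf M x = (\<Sum>i\<in>UNIV. \<Sum>j\<in>UNIV. x $ i * (M $ i $ j * x $ j))"
    by (simp add: qf_def inner_vec_def matrix_vector_mult_def sum_distrib_left)
  also have "\<dots> = (\<Sum>i\<in>UNIV. \<Sum>j\<in>UNIV. M $ i $ j * (x $ i * x $ j))"
    by (simp add: mult_ac)
  also have "\<dots> = M \<bullet> outer x x"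
    by (simp add: inner_vec_def outer_def)
  finally show ?thesis .
qed

lemma mat_inner_sym: "sym_mat M \<Longrightarrow> mat_inner M N = M \<bullet> N"
proof -
  assume a: "sym_mat M"
  have s: "M $ k $ i = M $ i $ k" for i k
  proof -
    have "M $ k $ i = (transpose M) $ k $ i" using a by (simp add: sym_mat_def)
    also have "\<dots> = M $ i $ k" by (simp add: transpose_def)
    finally show ?thesis .
  qed
  have "mat_inner M N = (\<Sum>i\<in>UNIV. \<Sum>k\<in>UNIV. M $ i $ k * N $ k $ i)"
    by (simp add: mat_inner_def trace_def matrix_matrix_mult_def)
  also have "\<dots> = (\<Sum>k\<in>UNIV. \<Sum>i\<in>UNIV. M $ i $ k * N $ k $ i)" by (rule sum.swap)
  also have "\<dots> = (\<Sum>k\<in>UNIV. \<Sum>i\<in>UNIV. M $ k $ i * N $ k $ i)" using s by simp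
  also have "\<dots> = M \<bullet> N" by (simp add: inner_vec_def)
  finally show ?thesis .
qed


lemma inner_transpose: "M \<bullet> transpose (Y::real^'n^'n) = transpose M \<bullet> Y"
proof -
  have "M \<bullet> transpose Y = (\<Sum>i\<in>UNIV. \<Sum>j\<in>UNIV. M $ i $ j * Y $ j $ i)"
    by (simp add: inner_vec_def transpose_def)
  also have "\<dots> = (\<Sum>j\<in>UNIV. \<Sum>i\<in>UNIV. M $ i $ j * Y $ j $ i)" by (rule sum.swap)
  also have "\<dots> = transpose M \<bullet> Y" by (simp add: inner_vec_def transpose_def)
  finally show ?thesis .
qed

lemma bf_matneg[simp]: "bf (- A) x y = - bf A x y"
  by (simp add: bf_def matrix_vector_mult_def inner_vec_def sum_negf)

lemma qf_matneg[simp]: "qf (- A) x = - qf A x"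
  by (simp add: qf_bf)

lemma trace_scale: "trace (c *\<^sub>R (A::real^'n^'n)) = c * trace A"
  by (simp add: trace_def sum_distrib_left)

lemma trace_outer: "trace (outer x x) = x \<bullet> x"
  by (simp add: trace_def outer_def inner_vec_def)

lemma qf_transpose: "qf (transpose Y) x = qf Y x"
  by (simp add: qf_def dot_lmul_matrix[symmetric] inner_commute)

lemma linear_transpose: "linear (transpose :: real^'n^'n \<Rightarrow> real^'n^'n)"
  by (rule linearI) (simp_all add: transpose_def vec_eq_iff)

lemma linear_qf: "linear (\<lambda>X. qf X x)"
  by (rule linearI) simp_all

lemma linear_trace: "linear (trace :: real^'n^'n \<Rightarrow> real)"
  by (rule linearI) (simp_all add: trace_add trace_scale)

lemma cont_of_linear: "linear (f :: real^'n^'n \<Rightarrow> 'b::real_normed_vector) \<Longrightarrow> continuous_on S f"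
  by (simp add: linear_continuous_on linear_conv_bounded_linear)

lemma closed_K: "closed {X :: real^'n^'n. psd X \<and> trace X = 1}"
proof -
  have eq: "{X :: real^'n^'n. psd X \<and> trace X = 1} =
      {X. transpose X = X} \<inter> (\<Inter>x. {X. 0 \<le> qf X x}) \<inter> {X. trace X = 1}"
    by (auto simp: psd_qf sym_mat_def)
  show ?thesis unfolding eq
    by (intro closed_Int closed_INT closed_Collect_eq closed_Collect_le ballI
        cont_of_linear linear_transpose linear_qf linear_trace continuous_on_id continuous_on_const)
qed

lemma bounded_K: "bounded {X :: real^'n^'n. psd X \<and> trace X = 1}"
proof -
  have "norm X \<le> real CARD('n) * real CARD('n)" if X: "psd X" "trace X = 1" for X :: "real^'n^'n"
  proof -
    have dnn: "X $ k $ k \<ge> 0" for k using X(1) by (metis psd_qf qf_axis)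
    have dle: "X $ k $ k \<le> 1" for k
    proof -
      have "X $ k $ k \<le> (\<Sum>i\<in>UNIV. X $ i $ i)" by (rule member_le_sum) (use dnn in auto)
      then show ?thesis using X(2) by (simp add: trace_def)
    qed
    have ent: "\<bar>X $ i $ j\<bar> \<le> 1" for i j
    proof -
      have "(X $ i $ j)^2 \<le> X $ i $ i * X $ j $ j"
        using psd_cs[OF X(1), of "axis i 1" "axis j 1"] by (simp add: bf_axis qf_axis)
      also have "\<dots> \<le> 1" using dnn dle by (simp add: mult_le_one)
      finally show ?thesis by (simp add: abs_square_le_1)
    qed
    have rowb: "norm (X $ i) \<le> real CARD('n)" for i
    proof -
      have "norm (X $ i) \<le> (\<Sum>j\<in>UNIV. \<bar>X $ i $ j\<bar>)" by (rule norm_le_l1_cart)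
      also have "\<dots> \<le> (\<Sum>j\<in>(UNIV::'n set). 1)" by (rule sum_mono) (rule ent)
      finally show ?thesis by simp
    qed
    have "norm X \<le> (\<Sum>i\<in>UNIV. norm (X $ i))"
      unfolding norm_vec_def by (rule L2_set_le_sum) simp
    also have "\<dots> \<le> (\<Sum>i\<in>(UNIV::'n set). real CARD('n))" by (rule sum_mono) (rule rowb)
    finally show ?thesis by simp
  qed
  then show ?thesis unfolding bounded_iff by blast
qed

lemma exists_pd:
  fixes M1 M2 :: "real^'n^'n"
  assumes s1: "sym_mat M1" and s2: "sym_mat M2"
    and ni: "\<not> (\<exists>al1 al2::real. (al1, al2) \<noteq> (0, 0) \<and> psd (al1 *\<^sub>R M1 + al2 *\<^sub>R M2))"
  shows "\<exists>Z. sym_mat Z \<and> (\<forall>x. x \<noteq> 0 \<longrightarrow> qf Z x > 0) \<and> mat_inner M1 Z = 0 \<and> mat_inner M2 Z = 0"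
proof -
  define K where "K = {X :: real^'n^'n. psd X \<and> trace X = 1}"
  define L where "L = span {M1, M2}"
  have cK: "convex K" unfolding K_def
    by (rule convexI) (auto simp: psd_qf trace_add trace_scale intro!: sym_add sym_scale add_nonneg_nonneg mult_nonneg_nonneg)
  have coK: "compact K" unfolding K_def compact_eq_bounded_closed using closed_K bounded_K by blast
  define X1 :: "real^'n^'n" where "X1 = (1 / real CARD('n)) *\<^sub>R mat 1"
  have "X1 \<in> K"
  proof -
    have "sym_mat (mat 1 :: real^'n^'n)" by (simp add: sym_mat_def)
    moreover have "qf (mat 1) x \<ge> 0" for x :: "real^'n" by (simp add: qf_def)
    ultimately have "psd X1" unfolding X1_def by (simp add: psd_qf sym_scale)
    moreover have "trace X1 = 1" unfolding X1_def by (simp add: trace_scale trace_I)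
    ultimately show ?thesis by (simp add: K_def)
  qed
  then have neK: "K \<noteq> {}" by blast
  have cL: "convex L" unfolding L_def by (rule subspace_imp_convex[OF subspace_span])
  have clL: "closed L" unfolding L_def by (rule closed_span)
  have disj: "K \<inter> L = {}"
  proof (rule ccontr)
    assume "K \<inter> L \<noteq> {}"
    then obtain X where X: "X \<in> K" "X \<in> L" by blast
    then obtain s t where st: "X = s *\<^sub>R M1 + t *\<^sub>R M2" using span2 L_def by blast
    show False
    proof (cases "(s, t) = (0, 0)")
      case True
      then have "X = 0" using st by simp
      then show False using X(1) by (simp add: K_def trace_def)
    next
      case False
      then show False using ni X(1) st by (auto simp: K_def)
    qed
  qed
  obtain a b where ab: "\<forall>x\<in>K. inner a x < b" "\<forall>x\<in>L. inner a x > b"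
    using separating_hyperplane_compact_closed[OF cK coK neK cL clL disj] by blast
  have b0: "b < 0" using ab(2) span_zero[of "{M1, M2}"] unfolding L_def by fastforce
  have aL: "inner a l = 0" if l: "l \<in> L" for l
  proof (rule ccontr)
    assume nz: "inner a l \<noteq> 0"
    define t where "t = (b - 1) / inner a l"
    have "t *\<^sub>R l \<in> L" using l unfolding L_def by (rule span_mul)
    then have "inner a (t *\<^sub>R l) > b" using ab(2) by blast
    moreover have "inner a (t *\<^sub>R l) = b - 1" using nz unfolding t_def by simp
    ultimately show False by simp
  qed
  have aM: "inner a M1 = 0" "inner a M2 = 0"
    using aL[of M1] aL[of M2] unfolding L_def by (auto intro: span_base)
  define Z where "Z = Sym (- a)"
  have symZ: "sym_mat Z" unfolding Z_def by simp
  have qZ: "qf Z x = - (a \<bullet> outer x x)" for x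
  proof -
    have "qf Z x = (1/2) * (qf (- a) x + qf (transpose (- a)) x)"
      unfolding Z_def Sym_def by (simp add: qf_bf algebra_simps)
    also have "\<dots> = qf (- a) x" by (simp add: qf_transpose)
    also have "\<dots> = - (a \<bullet> outer x x)" by (simp add: qf_inner_outer)
    finally show ?thesis .
  qed
  have pos: "qf Z x > 0" if x: "x \<noteq> 0" for x
  proof -
    have xx: "x \<bullet> x > 0" using x by simp
    have "psd ((1 / (x \<bullet> x)) *\<^sub>R outer x x)"
      using xx psd_osum[of "[x]"] by (auto simp: psd_qf intro: sym_scale)
    moreover have "trace ((1 / (x \<bullet> x)) *\<^sub>R outer x x) = 1"
      using xx by (simp add: trace_scale trace_outer)
    ultimately have "(1 / (x \<bullet> x)) *\<^sub>R outer x x \<in> K" by (simp add: K_def)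
    then have "inner a ((1 / (x \<bullet> x)) *\<^sub>R outer x x) < b" using ab(1) by blast
    then have "(1 / (x \<bullet> x)) * (a \<bullet> outer x x) < 0" using b0 by simp
    then have "a \<bullet> outer x x < 0" using xx by (simp add: divide_less_0_iff mult_less_0_iff)
    then show ?thesis using qZ by simp
  qed
  have mi: "mat_inner M Z = 0" if sM: "sym_mat M" and aM0: "inner a M = 0" for M
  proof -
    have "mat_inner M Z = M \<bullet> Z" by (rule mat_inner_sym[OF sM])
    also have "\<dots> = (1/2) * (M \<bullet> (- a) + M \<bullet> transpose (- a))"
      unfolding Z_def Sym_def by (simp add: inner_add_right inner_diff_right)
    also have "M \<bullet> transpose (- a) = M \<bullet> (- a)"
      using inner_transpose[of M "- a"] sM by (simp add: sym_mat_def)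
    finally show ?thesis using aM0 by (simp add: inner_commute)
  qed
  show ?thesis using symZ pos mi[OF s1 aM(1)] mi[OF s2 aM(2)] by blast
qed



lemma mv_sum: "(M::real^'n^'m) *v sum_list (map (\<lambda>y. c y *\<^sub>R y) ys) = sum_list (map (\<lambda>y. c y *\<^sub>R (M *v y)) ys)"
proof -
  have sc: "M *v (k *\<^sub>R x) = k *\<^sub>R (M *v x)" for k x
    by (rule matrix_vector_mult_scaleR)
  show ?thesis by (induction ys) (simp_all add: matrix_vector_right_distrib sc)
qed

lemma null_pair:
  fixes M1 M2 :: "real^'n^'n"
  assumes s1: "sym_mat M1" and s2: "sym_mat M2" and rog: "ROG (S2 M1 M2)"
    and ni: "\<not> (\<exists>al1 al2::real. (al1, al2) \<noteq> (0, 0) \<and> psd (al1 *\<^sub>R M1 + al2 *\<^sub>R M2))"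
  shows "\<exists>y1 y2. qf M1 y1 = 0 \<and> qf M2 y1 = 0 \<and> qf M1 y2 = 0 \<and> qf M2 y2 = 0 \<and>
     (bf M1 y1 y2 \<noteq> 0 \<or> bf M2 y1 y2 \<noteq> 0)"
proof (rule ccontr)
  assume contra: "\<not> ?thesis"
  obtain Z where Z: "sym_mat Z" "\<And>x. x \<noteq> 0 \<Longrightarrow> qf Z x > 0" "mat_inner M1 Z = 0" "mat_inner M2 Z = 0"
    using exists_pd[OF s1 s2 ni] by blast
  have qZ: "qf Z x \<ge> 0" for x using Z(2)[of x] by (cases "x = 0") auto
  have "Z \<in> S2 M1 M2" using Z qZ by (simp add: S2_def psd_qf)
  then obtain ys where ys: "Z = osum ys" "\<forall>y\<in>set ys. qf M1 y \<ge> 0 \<and> qf M2 y \<ge> 0"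
    using rog_decomp[OF rog] by blast
  have n1: "qf M1 y = 0" if "y \<in> set ys" for y
  proof -
    have "sum_list (map (qf M1) ys) = 0" using Z(3) ys(1) by (simp add: mat_inner_osum)
    then show ?thesis using sum_nonneg_zero[where f="qf M1" and ys=ys] ys(2) that by auto
  qed
  have n2: "qf M2 y = 0" if "y \<in> set ys" for y
  proof -
    have "sum_list (map (qf M2) ys) = 0" using Z(4) ys(1) by (simp add: mat_inner_osum)
    then show ?thesis using sum_nonneg_zero[where f="qf M2" and ys=ys] ys(2) that by auto
  qed
  have bz: "bf M y' y = 0" if "y \<in> set ys" "y' \<in> set ys" "M = M1 \<or> M = M2" for M y y'
    using contra n1 n2 that by blast
  have M0: "M = 0" if sM: "sym_mat M" and MM: "M = M1 \<or> M = M2" for M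
  proof -
    have My: "M *v y = 0" if y: "y \<in> set ys" for y
    proof -
      have "Z *v (M *v y) = sum_list (map (\<lambda>y'. (y' \<bullet> (M *v y)) *\<^sub>R y') ys)"
        using ys(1) by (simp add: osum_mult)
      also have "\<dots> = sum_list (map (\<lambda>y'. 0) ys)"
        using bz[OF y _ MM] by (intro arg_cong[where f=sum_list] map_cong refl) (simp add: bf_def)
      finally have "Z *v (M *v y) = 0" by (induction ys) simp_all
      then have "qf Z (M *v y) = 0" by (simp add: qf_def)
      then show ?thesis using Z(2) by (metis less_irrefl)
    qed
    have MZ: "M *v (Z *v w) = 0" for w
    proof -
      have "M *v (Z *v w) = M *v sum_list (map (\<lambda>y. (y \<bullet> w) *\<^sub>R y) ys)"
        using ys(1) by (simp add: osum_mult)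
      also have "\<dots> = sum_list (map (\<lambda>y. (y \<bullet> w) *\<^sub>R (M *v y)) ys)" by (rule mv_sum)
      also have "\<dots> = sum_list (map (\<lambda>y. 0) ys)"
        using My by (intro arg_cong[where f=sum_list] map_cong refl) simp
      finally show ?thesis by (induction ys) simp_all
    qed
    have Mw: "M *v w = 0" for w
    proof -
      define q where "q = Z *v (M *v w)"
      have "q \<bullet> q = bf Z q (M *v w)" by (simp add: q_def bf_def)
      also have "\<dots> = bf Z (M *v w) q" by (rule bf_sym[OF Z(1)])
      also have "\<dots> = (M *v w) \<bullet> (Z *v q)" by (simp add: bf_def)
      also have "\<dots> = bf M w (Z *v q)" using bf_Mv[OF sM, of w "Z *v q"] by simp
      also have "\<dots> = 0" using MZ[of q] by (simp add: bf_def)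
      finally have "q = 0" by simp
      then have "qf Z (M *v w) = 0" by (simp add: qf_def q_def)
      then show ?thesis using Z(2) by (metis less_irrefl)
    qed
    have "M $ i $ j = 0" for i j using Mw[of "axis j 1"] bf_axis[of M i j] by (simp add: bf_def)
    then show ?thesis by (simp add: vec_eq_iff)
  qed
  have "M1 = 0" using M0[OF s1] by simp
  then have "psd (1 *\<^sub>R M1 + 0 *\<^sub>R M2)" by (simp add: psd_qf)
  moreover have "(1::real, 0::real) \<noteq> (0, 0)" by simp
  ultimately show False using ni by blast
qed

lemma necessity:
  fixes M1 M2 :: "real^'n^'n"
  assumes s1: "sym_mat M1" and s2: "sym_mat M2" and rog: "ROG (S2 M1 M2)"
    and ni: "\<not> (\<exists>al1 al2::real. (al1, al2) \<noteq> (0, 0) \<and> psd (al1 *\<^sub>R M1 + al2 *\<^sub>R M2))"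
  shows "\<exists>a b c :: real^'n. M1 = Sym (outer a c) \<and> M2 = Sym (outer b c)"
proof -
  obtain y1 y2 where y: "qf M1 y1 = 0" "qf M2 y1 = 0" "qf M1 y2 = 0" "qf M2 y2 = 0"
      and w: "bf M1 y1 y2 \<noteq> 0 \<or> bf M2 y1 y2 \<noteq> 0"
    using null_pair[OF s1 s2 rog ni] by blast
  define w1 where "w1 = bf M1 y1 y2"
  define w2 where "w2 = bf M2 y1 y2"
  define nn where "nn = w1^2 + w2^2"
  have nnp: "nn > 0" using w unfolding nn_def w1_def w2_def by (auto simp: add_pos_nonneg add_nonneg_pos)
  define N1 where "N1 = (w1 / nn) *\<^sub>R M1 + (w2 / nn) *\<^sub>R M2"
  define N2 where "N2 = (- w2) *\<^sub>R M1 + w1 *\<^sub>R M2"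
  have sN1: "sym_mat N1" unfolding N1_def by (intro sym_add sym_scale s1 s2)
  have sN2: "sym_mat N2" unfolding N2_def by (intro sym_add sym_scale s1 s2)
  have PM: "qf M1 u * bf M2 u v = qf M2 u * bf M1 u v"
    if "qf M1 u + qf M1 v = 0" "qf M2 u + qf M2 v = 0" for u v
    using rog_P[OF rog s1 s2 that] .
  have PN: "PP N1 N2"
    unfolding PP_def
  proof (intro allI impI)
    fix u v
    assume h1: "qf N1 u + qf N1 v = 0" and h2: "qf N2 u + qf N2 v = 0"
    define A where "A = qf M1 u + qf M1 v"
    define B where "B = qf M2 u + qf M2 v"
    have e1: "w1 * A + w2 * B = 0"
    proof -
      have "qf N1 u + qf N1 v = (w1 * A + w2 * B) / nn"
        unfolding N1_def A_def B_def by (simp add: add_divide_distrib algebra_simps)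
      then have "(w1 * A + w2 * B) / nn = 0" using h1 by simp
      then show ?thesis using nnp by simp
    qed
    have e2: "- w2 * A + w1 * B = 0" using h2 unfolding N2_def A_def B_def by (simp add: algebra_simps)
    have "nn * A = w1 * (w1 * A + w2 * B) - w2 * (- w2 * A + w1 * B)" unfolding nn_def by (simp add: power2_eq_square algebra_simps)
    then have "A = 0" using e1 e2 nnp by simp
    have "nn * B = w2 * (w1 * A + w2 * B) + w1 * (- w2 * A + w1 * B)" unfolding nn_def by (simp add: power2_eq_square algebra_simps)
    then have "B = 0" using e1 e2 nnp by simp
    have pm: "qf M1 u * bf M2 u v = qf M2 u * bf M1 u v"
      using PM[of u v] \<open>A = 0\<close> \<open>B = 0\<close> unfolding A_def B_def by simp
    define q1 where "q1 = qf M1 u"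
    define q2 where "q2 = qf M2 u"
    define b1 where "b1 = bf M1 u v"
    define b2 where "b2 = bf M2 u v"
    have r1: "qf N1 u = (w1 * q1 + w2 * q2) / nn" unfolding N1_def q1_def q2_def by (simp add: add_divide_distrib)
    have r2: "bf N2 u v = - w2 * b1 + w1 * b2" unfolding N2_def b1_def b2_def by simp
    have r3: "qf N2 u = - w2 * q1 + w1 * q2" unfolding N2_def q1_def q2_def by simp
    have r4: "bf N1 u v = (w1 * b1 + w2 * b2) / nn" unfolding N1_def b1_def b2_def by (simp add: add_divide_distrib)
    have idt: "(w1 * q1 + w2 * q2) * (- w2 * b1 + w1 * b2) - (- w2 * q1 + w1 * q2) * (w1 * b1 + w2 * b2)
        = nn * (q1 * b2 - q2 * b1)" unfolding nn_def power2_eq_square by algebra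
    have "q1 * b2 - q2 * b1 = 0" using pm unfolding q1_def q2_def b1_def b2_def by simp
    then have "(w1 * q1 + w2 * q2) * (- w2 * b1 + w1 * b2) = (- w2 * q1 + w1 * q2) * (w1 * b1 + w2 * b2)"
      using idt by simp
    then have "(w1 * q1 + w2 * q2) / nn * (- w2 * b1 + w1 * b2) = (- w2 * q1 + w1 * q2) * ((w1 * b1 + w2 * b2) / nn)"
      by (simp add: field_simps)
    then show "qf N1 u * bf N2 u v = qf N2 u * bf N1 u v" using r1 r2 r3 r4 by simp
  qed
  have ch: "CH N1 N2 y1 y2"
    unfolding CH_def
  proof (intro conjI sN1 sN2 PN)
    show "qf N1 y1 = 0" "qf N2 y1 = 0" "qf N1 y2 = 0" "qf N2 y2 = 0"
      unfolding N1_def N2_def using y by simp_all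
    have "bf N1 y1 y2 = (w1 * w1 + w2 * w2) / nn"
      unfolding N1_def by (simp add: w1_def[symmetric] w2_def[symmetric] add_divide_distrib)
    moreover have "w1 * w1 + w2 * w2 = nn" unfolding nn_def by (simp add: power2_eq_square)
    ultimately show "bf N1 y1 y2 = 1" using nnp by simp
    show "bf N2 y1 y2 = 0" unfolding N2_def
      by (simp add: w1_def[symmetric] w2_def[symmetric])
  qed
  have nz1: "(- w2, w1) \<noteq> (0::real, 0::real)" and nz2: "(w2, - w1) \<noteq> (0::real, 0::real)"
    using w unfolding w1_def w2_def by auto
  have "\<not> psd N2" using ni nz1 unfolding N2_def by blast
  then obtain xm where xm: "qf N2 xm < 0" using sN2 by (auto simp: psd_qf not_le)
  have "\<not> psd (w2 *\<^sub>R M1 + (- w1) *\<^sub>R M2)" using ni nz2 by blast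
  moreover have "sym_mat (w2 *\<^sub>R M1 + (- w1) *\<^sub>R M2)" by (intro sym_add sym_scale s1 s2)
  ultimately obtain xp0 where "qf (w2 *\<^sub>R M1 + (- w1) *\<^sub>R M2) xp0 < 0" by (auto simp: psd_qf not_le)
  then have xp: "qf N2 xp0 > 0" unfolding N2_def by simp
  obtain a b c where abc: "N1 = Sym (outer a c)" "N2 = Sym (outer b c)"
    using core[OF ch xp xm] by blast
  have nnw: "w1 * w1 + w2 * w2 = nn" unfolding nn_def by (simp add: power2_eq_square)
  have M1e: "M1 = w1 *\<^sub>R N1 + (- w2 / nn) *\<^sub>R N2"
  proof -
    have "w1 *\<^sub>R N1 + (- w2 / nn) *\<^sub>R N2 = (w1 * (w1 / nn) + (- w2 / nn) * (- w2)) *\<^sub>R M1 + (w1 * (w2 / nn) + (- w2 / nn) * w1) *\<^sub>R M2"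
      unfolding N1_def N2_def by (simp only: scaleR_add_right scaleR_add_left scaleR_scaleR add_ac)
    also have "w1 * (w1 / nn) + (- w2 / nn) * (- w2) = (w1 * w1 + w2 * w2) / nn" by (simp add: add_divide_distrib)
    also have "\<dots> = 1" using nnp nnw by simp
    also have "w1 * (w2 / nn) + (- w2 / nn) * w1 = 0" by simp
    finally show ?thesis by simp
  qed
  have M2e: "M2 = w2 *\<^sub>R N1 + (w1 / nn) *\<^sub>R N2"
  proof -
    have "w2 *\<^sub>R N1 + (w1 / nn) *\<^sub>R N2 = (w2 * (w1 / nn) + (w1 / nn) * (- w2)) *\<^sub>R M1 + (w2 * (w2 / nn) + (w1 / nn) * w1) *\<^sub>R M2"
      unfolding N1_def N2_def by (simp only: scaleR_add_right scaleR_add_left scaleR_scaleR add_ac)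
    also have "w2 * (w2 / nn) + (w1 / nn) * w1 = (w1 * w1 + w2 * w2) / nn" by (simp add: add_divide_distrib)
    also have "\<dots> = 1" using nnp nnw by simp
    also have "w2 * (w1 / nn) + (w1 / nn) * (- w2) = 0" by simp
    finally show ?thesis by simp
  qed
  have "M1 = Sym (outer (w1 *\<^sub>R a + (- w2 / nn) *\<^sub>R b) c)"
    using M1e abc by (simp only: Sym_outer_add Sym_outer_scale)
  moreover have "M2 = Sym (outer (w2 *\<^sub>R a + (w1 / nn) *\<^sub>R b) c)"
    using M2e abc by (simp only: Sym_outer_add Sym_outer_scale)
  ultimately show ?thesis by blast
qed

theorem theorem4p1:
  fixes M1 M2 :: "real^'n^'n"
  assumes "sym_mat M1" and "sym_mat M2"
  shows "ROG (S2 M1 M2) \<longleftrightarrow>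
    ((\<exists>\<alpha>1 \<alpha>2::real. (\<alpha>1, \<alpha>2) \<noteq> (0, 0) \<and> psd (\<alpha>1 *\<^sub>R M1 + \<alpha>2 *\<^sub>R M2)) \<or>
     (\<exists>a b c :: real^'n. M1 = Sym (outer a c) \<and> M2 = Sym (outer b c)))"
proof
  assume rog: "ROG (S2 M1 M2)"
  show "(\<exists>\<alpha>1 \<alpha>2::real. (\<alpha>1, \<alpha>2) \<noteq> (0, 0) \<and> psd (\<alpha>1 *\<^sub>R M1 + \<alpha>2 *\<^sub>R M2)) \<or>
     (\<exists>a b c :: real^'n. M1 = Sym (outer a c) \<and> M2 = Sym (outer b c))"
    using necessity[OF assms rog] by blast
next
  assume "(\<exists>\<alpha>1 \<alpha>2::real. (\<alpha>1, \<alpha>2) \<noteq> (0, 0) \<and> psd (\<alpha>1 *\<^sub>R M1 + \<alpha>2 *\<^sub>R M2)) \<or>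
     (\<exists>a b c :: real^'n. M1 = Sym (outer a c) \<and> M2 = Sym (outer b c))"
  then show "ROG (S2 M1 M2)" by (rule sufficiency)
qed

end
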